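(* Let $W$ be a matrix weight. The orthonormal system $H_W$ is complete in $L^2(W)$; i.e. if $f\in L^2(W)$ satisfies $\langle f,h\rangle_{L^2(W)}=0$ for every $h\in H_W$, then $f=0$. Hence $H_W$ is an orthonormal basis of $L^2(W)$.
   Context: A matrix weight is a $d\times d$ matrix-valued function on $\mathbb{R}$, positive definite a.e., with locally integrable entries; $L^2(W)$ has inner product $\langle f,g\rangle_{L^2(W)}=\int\langle W(x)f(x),g(x)\rangle_{\mathbb{C}^d}dx$. $\mathcal{D}$ is the standard dyadic grid, $J_\pm$ the right/left halves of $J$, $W(J)=\int_JW$. For $J\in\mathcal{D}$ let $v_J^1,\dots,v_J^d$ be an orthonormal eigenbasis of the positive definite matrix $W(J)W(J_+)^{-1}W(J_-)=W(J_-)W(J_+)^{-1}W(J_-)+W(J_-)$, $w_J^j=\|(W(J)W(J_+)^{-1}W(J_-))^{1/2}v_J^j\|$, and $h_J^{W,j}=(w_J^j)^{-1}\big(W(J_+)^{-1}W(J_-)v_J^j\mathbf{1}_{J_+}-v_J^j\mathbf{1}_{J_-}\big)$. Let $e_1,\dots,e_{p_1}$ be an orthonormal basis of $\{e\in\mathbb{C}^d:\mathbf{1}_{[0,\infty)}e\in L^2(W)\}$ and $h_1^{W,i}=c_1^i\mathbf{1}_{[0,\infty)}e_i$ normalized in $L^2(W)$; analogously $h_2^{W,i}=c_2^i\mathbf{1}_{(-\infty,0]}\nu_i$. $H_W=\{h_J^{W,j}\}\cup\{h_k^{W,i}\}$. *)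

theory Defs
  imports "HOL-Analysis.Analysis"
begin

definition cinner :: "complex^'n \<Rightarrow> complex^'n \<Rightarrow> complex" where
  "cinner x y = (\<Sum>i\<in>UNIV. x $ i * cnj (y $ i))"

definition adjoint_mat :: "complex^'n^'n \<Rightarrow> complex^'n^'n" where
  "adjoint_mat A = (\<chi> i j. cnj (A $ j $ i))"

definition hermitian_mat :: "complex^'n^'n \<Rightarrow> bool" where
  "hermitian_mat A \<longleftrightarrow> adjoint_mat A = A"

definition pos_def_mat :: "complex^'n^'n \<Rightarrow> bool" where
  "pos_def_mat A \<longleftrightarrow> hermitian_mat A \<and>
     (\<forall>x. x \<noteq> 0 \<longrightarrow> Re (cinner (A *v x) x) > 0)"

definition pos_semidef_mat :: "complex^'n^'n \<Rightarrow> bool" where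
  "pos_semidef_mat A \<longleftrightarrow> hermitian_mat A \<and>
     (\<forall>x. Re (cinner (A *v x) x) \<ge> 0)"

definition mat_sqrt :: "complex^'n^'n \<Rightarrow> complex^'n^'n" where
  "mat_sqrt M = (THE S. pos_semidef_mat S \<and> S ** S = M)"

text \<open>A family of vectors indexed by 'n (hence d vectors) is an orthonormal basis of C^d
  iff it is orthonormal.\<close>
definition orthonormal_family :: "('n \<Rightarrow> complex^'n) \<Rightarrow> bool" where
  "orthonormal_family v \<longleftrightarrow>
     (\<forall>i j. cinner (v i) (v j) = (if i = j then 1 else 0))"

definition orthonormal_eigenbasis :: "complex^'n^'n \<Rightarrow> ('n \<Rightarrow> complex^'n) \<Rightarrow> bool" where
  "orthonormal_eigenbasis M v \<longleftrightarrow> orthonormal_family v \<and>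
     (\<forall>j. \<exists>c. M *v v j = c *s v j)"

definition is_cONB :: "(complex^'n) set \<Rightarrow> (complex^'n) set \<Rightarrow> bool" where
  "is_cONB E V \<longleftrightarrow> finite E \<and> E \<subseteq> V \<and>
     (\<forall>e\<in>E. \<forall>e'\<in>E. cinner e e' = (if e = e' then 1 else 0)) \<and>
     V = {\<Sum>e\<in>E. c e *s e | c. True}"

definition matrix_weight :: "(real \<Rightarrow> complex^'n^'n) \<Rightarrow> bool" where
  "matrix_weight W \<longleftrightarrow>
     (\<forall>i j. (\<lambda>x. W x $ i $ j) \<in> borel_measurable lborel) \<and>
     (AE x in lborel. pos_def_mat (W x)) \<and>
     (\<forall>a b. \<forall>i j. set_integrable lborel {a..b} (\<lambda>x. W x $ i $ j))"

definition L2W :: "(real \<Rightarrow> complex^'n^'n) \<Rightarrow> (real \<Rightarrow> complex^'n) set" where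
  "L2W W = {f. f \<in> borel_measurable lborel \<and>
     integrable lborel (\<lambda>x. cinner (W x *v f x) (f x))}"

definition l2w_inner :: "(real \<Rightarrow> complex^'n^'n) \<Rightarrow> (real \<Rightarrow> complex^'n) \<Rightarrow> (real \<Rightarrow> complex^'n) \<Rightarrow> complex" where
  "l2w_inner W f g = integral\<^sup>L lborel (\<lambda>x. cinner (W x *v f x) (g x))"

definition l2w_norm :: "(real \<Rightarrow> complex^'n^'n) \<Rightarrow> (real \<Rightarrow> complex^'n) \<Rightarrow> real" where
  "l2w_norm W f = sqrt (Re (l2w_inner W f f))"

text \<open>The dyadic interval indexed by (n,k) is [k 2^-n, (k+1) 2^-n); every element of the
  standard dyadic grid arises from exactly one pair (n,k).\<close>
definition dyadic :: "int \<times> int \<Rightarrow> real set" where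
  "dyadic J = {real_of_int (snd J) / 2 powi (fst J) ..< real_of_int (snd J + 1) / 2 powi (fst J)}"

definition dyadic_left :: "int \<times> int \<Rightarrow> real set" where
  "dyadic_left J = dyadic (fst J + 1, 2 * snd J)"

definition dyadic_right :: "int \<times> int \<Rightarrow> real set" where
  "dyadic_right J = dyadic (fst J + 1, 2 * snd J + 1)"

definition Wint :: "(real \<Rightarrow> complex^'n^'n) \<Rightarrow> real set \<Rightarrow> complex^'n^'n" where
  "Wint W S = (\<chi> i j. set_lebesgue_integral lborel S (\<lambda>x. W x $ i $ j))"

definition haar_matrix :: "(real \<Rightarrow> complex^'n^'n) \<Rightarrow> int \<times> int \<Rightarrow> complex^'n^'n" where
  "haar_matrix W J = Wint W (dyadic J) ** matrix_inv (Wint W (dyadic_right J)) ** Wint W (dyadic_left J)"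

definition haar_weight :: "(real \<Rightarrow> complex^'n^'n) \<Rightarrow> int \<times> int \<Rightarrow> complex^'n \<Rightarrow> real" where
  "haar_weight W J v = norm (mat_sqrt (haar_matrix W J) *v v)"

definition haar_fun :: "(real \<Rightarrow> complex^'n^'n) \<Rightarrow> int \<times> int \<Rightarrow> complex^'n \<Rightarrow> real \<Rightarrow> complex^'n" where
  "haar_fun W J v x =
     complex_of_real (1 / haar_weight W J v) *s
       ((if x \<in> dyadic_right J then
           (matrix_inv (Wint W (dyadic_right J)) ** Wint W (dyadic_left J)) *v v else 0)
        - (if x \<in> dyadic_left J then v else 0))"

definition ind_vec :: "real set \<Rightarrow> complex^'n \<Rightarrow> real \<Rightarrow> complex^'n" where
  "ind_vec S e x = (if x \<in> S then e else 0)"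

definition admissible_vecs :: "(real \<Rightarrow> complex^'n^'n) \<Rightarrow> real set \<Rightarrow> (complex^'n) set" where
  "admissible_vecs W S = {e. ind_vec S e \<in> L2W W}"

definition normalized_ind :: "(real \<Rightarrow> complex^'n^'n) \<Rightarrow> real set \<Rightarrow> complex^'n \<Rightarrow> real \<Rightarrow> complex^'n" where
  "normalized_ind W S e x = complex_of_real (1 / l2w_norm W (ind_vec S e)) *s ind_vec S e x"

definition haar_system ::
  "(real \<Rightarrow> complex^'n^'n) \<Rightarrow> (int \<times> int \<Rightarrow> 'n \<Rightarrow> complex^'n) \<Rightarrow>
   (complex^'n) set \<Rightarrow> (complex^'n) set \<Rightarrow> (real \<Rightarrow> complex^'n) set" where
  "haar_system W v E1 E2 =
     {haar_fun W J (v J j) | J j. True}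
     \<union> {normalized_ind W {0..} e | e. e \<in> E1}
     \<union> {normalized_ind W {..0} e | e. e \<in> E2}"

end

theory Submission
  imports Defs
begin

lemma cinner_add_left: "cinner (x + y) z = cinner x z + cinner y z"
  by (simp add: cinner_def sum.distrib algebra_simps)
lemma cinner_add_right: "cinner x (y + z) = cinner x y + cinner x z"
  by (simp add: cinner_def sum.distrib algebra_simps)
lemma cinner_diff_left: "cinner (x - y) z = cinner x z - cinner y z"
  by (simp add: cinner_def sum_subtractf algebra_simps)
lemma cinner_diff_right: "cinner x (y - z) = cinner x y - cinner x z"
  by (simp add: cinner_def sum_subtractf algebra_simps)
lemma cinner_scale_left: "cinner (c *s x) y = c * cinner x y"
  by (simp add: cinner_def sum_distrib_left algebra_simps)
lemma cinner_scale_right: "cinner x (c *s y) = cnj c * cinner x y"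
  by (simp add: cinner_def sum_distrib_left algebra_simps)
lemma cinner_zero_left[simp]: "cinner 0 y = 0"
  by (simp add: cinner_def)
lemma cinner_zero_right[simp]: "cinner x 0 = 0"
  by (simp add: cinner_def)
lemma cinner_sum_left: "cinner (sum f A) y = (\<Sum>a\<in>A. cinner (f a) y)"
  by (induction A rule: infinite_finite_induct) (auto simp: cinner_add_left)
lemma cinner_sum_right: "cinner x (sum f A) = (\<Sum>a\<in>A. cinner x (f a))"
  by (induction A rule: infinite_finite_induct) (auto simp: cinner_add_right)
lemma cinner_commute: "cinner y x = cnj (cinner x y)"
  by (simp add: cinner_def cnj_sum mult.commute)

lemma cinner_self: "cinner x x = complex_of_real (norm x ^ 2)"
proof -
  have "norm x ^ 2 = (\<Sum>i\<in>UNIV. norm (x $ i) ^ 2)"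
    by (simp add: norm_vec_def L2_set_def sum_nonneg)
  have "cinner x x = (\<Sum>i\<in>UNIV. complex_of_real (norm (x $ i) ^ 2))"
    unfolding cinner_def complex_norm_square by simp
  then show ?thesis
    using \<open>norm x ^ 2 = _\<close> by (simp only: of_real_sum)
qed

lemma cinner_self_eq_0: "cinner x x = 0 \<longleftrightarrow> x = 0"
  by (simp add: cinner_self)

lemma Re_cinner_self: "Re (cinner x x) = norm x ^ 2"
  by (simp add: cinner_self)

lemma hermitian_cinner:
  assumes "hermitian_mat A"
  shows "cinner (A *v x) y = cinner x (A *v y)"
proof -
  have A: "\<And>i j. A $ i $ j = cnj (A $ j $ i)"
    using assms unfolding hermitian_mat_def adjoint_mat_def
    by (metis vec_lambda_beta)
  have "cinner (A *v x) y = (\<Sum>i\<in>UNIV. \<Sum>j\<in>UNIV. A $ i $ j * x $ j * cnj (y $ i))"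
    by (simp add: cinner_def matrix_vector_mult_def sum_distrib_right)
  also have "\<dots> = (\<Sum>j\<in>UNIV. \<Sum>i\<in>UNIV. A $ i $ j * x $ j * cnj (y $ i))"
    by (rule sum.swap)
  also have "\<dots> = cinner x (A *v y)"
    by (simp add: cinner_def matrix_vector_mult_def sum_distrib_left cnj_sum A[symmetric] algebra_simps)
  finally show ?thesis .
qed

lemma hermitian_cinner_real:
  assumes "hermitian_mat A"
  shows "Im (cinner (A *v x) x) = 0"
proof -
  have "cinner (A *v x) x = cnj (cinner (A *v x) x)"
    using hermitian_cinner[OF assms, of x x] cinner_commute[of x "A *v x"] by simp
  then have "Im (cinner (A *v x) x) = - Im (cinner (A *v x) x)"
    by (metis complex_cnj_cancel_iff cnj.sel(2))
  then show ?thesis by simp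
qed

lemma orth_indep:
  fixes S :: "(complex^'n) set"
  assumes "\<And>x y. x\<in>S \<Longrightarrow> y\<in>S \<Longrightarrow> x\<noteq>y \<Longrightarrow> cinner x y = 0" "0 \<notin> S"
  shows "vec.independent S"
proof
  assume "vec.dependent S"
  then obtain t u where t: "finite t" "t \<subseteq> S" "(\<Sum>v\<in>t. u v *s v) = 0" and "\<exists>v\<in>t. u v \<noteq> 0"
    unfolding vec.dependent_explicit by blast
  then obtain y where y: "y\<in>t" "u y \<noteq> 0" by blast
  have "0 = cinner (\<Sum>v\<in>t. u v *s v) y" using t by simp
  also have "\<dots> = (\<Sum>v\<in>t. u v * cinner v y)"
    by (simp add: cinner_sum_left cinner_scale_left)
  also have "\<dots> = u y * cinner y y + (\<Sum>v\<in>t-{y}. u v * cinner v y)"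
    using t y by (simp add: sum.remove)
  also have "(\<Sum>v\<in>t-{y}. u v * cinner v y) = 0"
    using t y assms(1) by (intro sum.neutral) auto
  finally have "u y * cinner y y = 0" by simp
  moreover have "y \<noteq> 0" using assms(2) t y by auto
  ultimately show False using y cinner_self_eq_0 by auto
qed

lemma onb_complete:
  fixes v :: "'n \<Rightarrow> complex^'n"
  assumes "orthonormal_family v" "\<And>j. cinner w (v j) = 0"
  shows "w = 0"
proof (rule ccontr)
  assume w: "w \<noteq> 0"
  have vv: "cinner (v i) (v j) = (if i = j then 1 else 0)" for i j
    using assms(1) unfolding orthonormal_family_def by blast
  have injv: "inj v"
  proof
    fix i j assume "v i = v j"
    then have "cinner (v i) (v j) = 1" using vv[of j j] by simp
    then show "i = j" using vv[of i j] by (auto split: if_splits)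
  qed
  have wv: "w \<notin> range v"
  proof
    assume "w \<in> range v" then obtain j where "w = v j" by auto
    then show False using assms(2)[of j] vv[of j j] by simp
  qed
  let ?S = "insert w (range v)"
  have "vec.independent ?S"
  proof (rule orth_indep)
    fix x y assume "x \<in> ?S" "y \<in> ?S" "x \<noteq> y"
    have wv': "cinner (v j) w = 0" for j
      using assms(2)[of j] cinner_commute[of "v j" w] by simp
    from \<open>x \<in> ?S\<close> \<open>y \<in> ?S\<close> \<open>x \<noteq> y\<close> show "cinner x y = 0"
      using assms(2) vv wv' by auto
  next
    have "v j \<noteq> 0" for j using vv[of j j] by auto
    then show "0 \<notin> ?S" using w by auto
  qed
  then have "card ?S \<le> CARD('n)"
    using vec.independent_card_le_dim[of ?S UNIV] vec_dim_card[where 'a=complex and 'n='n] by auto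
  moreover have "card ?S = CARD('n) + 1"
    using wv injv by (simp add: card_image)
  ultimately show False by simp
qed

lemma onb_expand:
  fixes v :: "'n \<Rightarrow> complex^'n"
  assumes "orthonormal_family v"
  shows "x = (\<Sum>j\<in>UNIV. cinner x (v j) *s v j)"
proof -
  have vv: "cinner (v i) (v j) = (if i = j then 1 else 0)" for i j
    using assms(1) unfolding orthonormal_family_def by blast
  have "x - (\<Sum>j\<in>UNIV. cinner x (v j) *s v j) = 0"
  proof (rule onb_complete[OF assms])
    fix k
    show "cinner (x - (\<Sum>j\<in>UNIV. cinner x (v j) *s v j)) (v k) = 0"
      by (simp add: cinner_diff_left cinner_sum_left cinner_scale_left vv if_distrib
          cong: if_cong)
  qed
  then show ?thesis by simp
qed

lemma pd_inj:
  assumes "pos_def_mat A" "A *v x = 0" shows "x = 0"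
  using assms unfolding pos_def_mat_def by force

lemma pd_inverse:
  fixes A :: "complex^'n^'n"
  assumes "pos_def_mat A"
  shows "A ** matrix_inv A = mat 1" "matrix_inv A ** A = mat 1"
proof -
  have "\<exists>B. B ** A = mat 1"
    using pd_inj[OF assms] matrix_left_invertible_ker by blast
  then have "invertible A" using invertible_left_inverse by blast
  then have "\<exists>A'. A ** A' = mat 1 \<and> A' ** A = mat 1" unfolding invertible_def by blast
  then have "A ** matrix_inv A = mat 1 \<and> matrix_inv A ** A = mat 1"
    unfolding matrix_inv_def by (rule someI_ex)
  then show "A ** matrix_inv A = mat 1" "matrix_inv A ** A = mat 1" by auto
qed

lemma scale_of_real: "complex_of_real r *s x = r *\<^sub>R (x::complex^'n)"
proof (subst vec_eq_iff, intro allI)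
  fix i
  have "(r *\<^sub>R x) $ i = r *\<^sub>R (x $ i)" by (rule vector_scaleR_component)
  also have "\<dots> = complex_of_real r * x $ i" by (rule scaleR_conv_of_real)
  finally show "(complex_of_real r *s x) $ i = (r *\<^sub>R x) $ i" by simp
qed

lemma smult_smult: "a *s (b *s (x::complex^'n)) = (a * b) *s x"
  by (simp add: vec_eq_iff)
lemma psd_sqrt_eig:
  fixes S :: "complex^'n^'n"
  assumes "pos_semidef_mat S" "S ** S = H" "H *v x = complex_of_real c *s x" "c > 0"
  shows "S *v x = complex_of_real (sqrt c) *s x"
proof -
  let ?r = "complex_of_real (sqrt c)"
  define w where "w = S *v x - ?r *s x"
  have rr: "?r * ?r = complex_of_real c"
  proof -
    have "sqrt c * sqrt c = c" using assms(4) by simp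
    then show ?thesis by (metis of_real_mult)
  qed
  have SSx: "S *v (S *v x) = H *v x" using assms(2) matrix_vector_mul_assoc by metis
  have "S *v w + ?r *s w = S *v (S *v x) - (?r * ?r) *s x"
    unfolding w_def by (simp add: vec.diff vec.scale smult_smult vector_ssub_ldistrib)
  also have "\<dots> = 0" using SSx rr assms(3) by simp
  finally have "S *v w + ?r *s w = 0" .
  then have "cinner (S *v w + ?r *s w) w = 0" by simp
  then have "cinner (S *v w) w + ?r * cinner w w = 0"
    by (simp add: cinner_add_left cinner_scale_left)
  then have "Re (cinner (S *v w) w + ?r * cinner w w) = 0" by simp
  moreover have "Re (?r * cinner w w) = sqrt c * norm w ^ 2"
    by (simp add: Re_cinner_self)
  moreover have "Re (cinner (S *v w) w + ?r * cinner w w) = Re (cinner (S *v w) w) + Re (?r * cinner w w)"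
    by (rule plus_complex.sel)
  ultimately have "Re (cinner (S *v w) w) + sqrt c * norm w ^ 2 = 0" by linarith
  moreover have "Re (cinner (S *v w) w) \<ge> 0" using assms(1) unfolding pos_semidef_mat_def by blast
  ultimately have "sqrt c * norm w ^ 2 \<le> 0" by linarith
  then have "norm w ^ 2 \<le> 0" using assms(4) by (simp add: mult_le_0_iff)
  then have "w = 0" by simp
  then show ?thesis unfolding w_def by (simp add: right_minus_eq)
qed

definition sq_mat :: "('n \<Rightarrow> complex^'n) \<Rightarrow> ('n \<Rightarrow> real) \<Rightarrow> complex^'n^'n" where
  "sq_mat v r = (\<chi> a b. \<Sum>j\<in>UNIV. complex_of_real (r j) * (v j $ a) * cnj (v j $ b))"

lemma sq_mat_apply:
  "sq_mat v r *v x = (\<Sum>j\<in>UNIV. (complex_of_real (r j) * cinner x (v j)) *s v j)"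
proof -
  have "(sq_mat v r *v x) $ a = (\<Sum>j\<in>UNIV. (complex_of_real (r j) * cinner x (v j)) * v j $ a)" for a
  proof -
    have "(sq_mat v r *v x) $ a = (\<Sum>b\<in>UNIV. \<Sum>j\<in>UNIV. complex_of_real (r j) * (v j $ a) * cnj (v j $ b) * x $ b)"
      by (simp add: sq_mat_def matrix_vector_mult_def sum_distrib_right)
    also have "\<dots> = (\<Sum>j\<in>UNIV. \<Sum>b\<in>UNIV. complex_of_real (r j) * (v j $ a) * cnj (v j $ b) * x $ b)"
      by (rule sum.swap)
    also have "\<dots> = (\<Sum>j\<in>UNIV. (complex_of_real (r j) * cinner x (v j)) * v j $ a)"
      by (simp add: cinner_def sum_distrib_left sum_distrib_right algebra_simps)
    finally show ?thesis .
  qed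
  then show ?thesis by (simp add: vec_eq_iff)
qed

lemma sq_mat_herm: "hermitian_mat (sq_mat v r)"
  unfolding hermitian_mat_def adjoint_mat_def sq_mat_def vec_eq_iff
proof (intro allI)
  fix i j
  show "(\<chi> i j. cnj ((\<chi> a b. \<Sum>j\<in>UNIV. complex_of_real (r j) * v j $ a * cnj (v j $ b)) $ j $ i)) $ i $ j =
          (\<chi> a b. \<Sum>j\<in>UNIV. complex_of_real (r j) * v j $ a * cnj (v j $ b)) $ i $ j"
    by (simp add: cnj_sum) (rule sum.cong, auto)
qed

lemma sq_mat_psd:
  assumes "\<And>j. r j \<ge> 0"
  shows "pos_semidef_mat (sq_mat v r)"
  unfolding pos_semidef_mat_def
proof (intro conjI allI sq_mat_herm)
  fix x
  have "cinner (sq_mat v r *v x) x = (\<Sum>j\<in>UNIV. complex_of_real (r j) * (cinner x (v j) * cnj (cinner x (v j))))"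
    by (simp add: sq_mat_apply cinner_sum_left cinner_scale_left cinner_commute[of "v _" x] mult.assoc)
  also have "\<dots> = (\<Sum>j\<in>UNIV. complex_of_real (r j) * complex_of_real (cmod (cinner x (v j)) ^ 2))"
    by (simp only: complex_norm_square)
  also have "\<dots> = complex_of_real (\<Sum>j\<in>UNIV. r j * cmod (cinner x (v j)) ^ 2)"
    by (simp only: of_real_mult of_real_sum)
  finally show "Re (cinner (sq_mat v r *v x) x) \<ge> 0"
    using assms by (simp add: sum_nonneg)
qed

lemma onb_vv: "orthonormal_family v \<Longrightarrow> cinner (v i) (v j) = (if i = j then 1 else 0)"
  unfolding orthonormal_family_def by blast

lemma sq_mat_eig:
  assumes "orthonormal_family v"
  shows "sq_mat v r *v v k = complex_of_real (r k) *s v k"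
proof -
  have "\<And>j. (complex_of_real (r j) * cinner (v k) (v j)) *s v j = (if j = k then complex_of_real (r k) *s v k else 0)"
    by (auto simp: onb_vv[OF assms])
  then show ?thesis by (simp add: sq_mat_apply)
qed

lemma mat_eq_on_onb:
  fixes A B :: "complex^'n^'n"
  assumes "orthonormal_family v" "\<And>j. A *v v j = B *v v j"
  shows "A = B"
proof -
  have "A *v x = B *v x" for x
  proof -
    have "A *v x = A *v (\<Sum>j\<in>UNIV. cinner x (v j) *s v j)" using onb_expand[OF assms(1)] by metis
    also have "\<dots> = B *v (\<Sum>j\<in>UNIV. cinner x (v j) *s v j)"
      by (simp add: vec.sum vec.scale assms(2))
    also have "\<dots> = B *v x" using onb_expand[OF assms(1)] by metis
    finally show ?thesis .
  qed
  then show ?thesis using matrix_eq by blast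
qed

lemma mat_sqrt_eig:
  fixes H :: "complex^'n^'n"
  assumes "orthonormal_eigenbasis H v"
    and pos: "\<And>x. x \<noteq> 0 \<Longrightarrow> Im (cinner (H *v x) x) = 0 \<and> Re (cinner (H *v x) x) > 0"
  shows "mat_sqrt H *v v j \<noteq> 0"
proof -
  have onb: "orthonormal_family v" using assms(1) unfolding orthonormal_eigenbasis_def by blast
  have vnz: "v k \<noteq> 0" for k using onb_vv[OF onb, of k k] by auto
  have "\<exists>e. e > 0 \<and> H *v v k = complex_of_real e *s v k" for k
  proof -
    obtain c where c: "H *v v k = c *s v k"
      using assms(1) unfolding orthonormal_eigenbasis_def by blast
    have "cinner (H *v v k) (v k) = c" using c onb_vv[OF onb, of k k] by (simp add: cinner_scale_left)
    then have "Im c = 0" "Re c > 0" using pos[OF vnz[of k]] by auto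
    then have "c = complex_of_real (Re c)" by (simp add: complex_eq_iff)
    then have "c *s v k = complex_of_real (Re c) *s v k" by (rule arg_cong[where f="\<lambda>z. z *s v k"])
    then show ?thesis using c \<open>Re c > 0\<close> by auto
  qed
  then obtain e where e: "\<And>k. e k > 0" "\<And>k. H *v v k = complex_of_real (e k) *s v k"
    by metis
  define S0 where "S0 = sq_mat v (\<lambda>k. sqrt (e k))"
  have S0psd: "pos_semidef_mat S0" unfolding S0_def by (rule sq_mat_psd) (use e(1) in \<open>simp add: less_imp_le\<close>)
  have S0eig: "S0 *v v k = complex_of_real (sqrt (e k)) *s v k" for k
    unfolding S0_def by (rule sq_mat_eig[OF onb])
  have S0sq: "S0 ** S0 = H"
  proof (rule mat_eq_on_onb[OF onb])
    fix k
    have "(S0 ** S0) *v v k = S0 *v (S0 *v v k)" by (simp add: matrix_vector_mul_assoc)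
    also have "\<dots> = complex_of_real (sqrt (e k) * sqrt (e k)) *s v k"
      by (simp only: S0eig vec.scale smult_smult of_real_mult)
    also have "sqrt (e k) * sqrt (e k) = e k" using e(1)[of k] by simp
    also have "complex_of_real (e k) *s v k = H *v v k" using e(2)[of k] by simp
    finally show "(S0 ** S0) *v v k = H *v v k" .
  qed
  have uniq: "T = S0" if "pos_semidef_mat T" "T ** T = H" for T
  proof (rule mat_eq_on_onb[OF onb])
    fix k show "T *v v k = S0 *v v k"
      using psd_sqrt_eig[OF that e(2)[of k] e(1)[of k]] S0eig[of k] by simp
  qed
  have "mat_sqrt H = S0"
    unfolding mat_sqrt_def
  proof (rule the_equality)
    show "pos_semidef_mat S0 \<and> S0 ** S0 = H" using S0psd S0sq by blast
  next
    fix T assume "pos_semidef_mat T \<and> T ** T = H"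
    then show "T = S0" using uniq by blast
  qed
  then have "mat_sqrt H *v v j = complex_of_real (sqrt (e j)) *s v j" using S0eig by simp
  then show ?thesis using e(1)[of j] vnz[of j]
    by (simp add: scale_of_real)
qed

lemma meas_nth:
  fixes g :: "'a \<Rightarrow> complex^'n"
  assumes "g \<in> borel_measurable M"
  shows "(\<lambda>x. g x $ i) \<in> borel_measurable M"
proof -
  have "(\<lambda>y::complex^'n. y $ i) \<in> borel_measurable borel"
    by (rule borel_measurable_continuous_onI, rule linear_continuous_on, rule bounded_linear_vec_nth)
  from measurable_compose[OF assms this] show ?thesis by (simp add: o_def)
qed

lemma meas_vec:
  fixes g :: "'a \<Rightarrow> complex^'n"
  assumes "\<And>i. (\<lambda>x. g x $ i) \<in> borel_measurable M"
  shows "g \<in> borel_measurable M"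
proof (subst borel_measurable_euclidean_space, intro ballI)
  fix b :: "complex^'n" assume "b \<in> Basis"
  then obtain i u where b: "b = axis i u" unfolding Basis_vec_def by blast
  have "(\<lambda>x. g x $ i \<bullet> u) \<in> borel_measurable M"
    by (rule borel_measurable_inner[OF assms[of i] borel_measurable_const])
  then show "(\<lambda>x. g x \<bullet> b) \<in> borel_measurable M" unfolding b inner_axis .
qed
lemma meas_cnj:
  assumes "g \<in> borel_measurable M"
  shows "(\<lambda>x. cnj (g x)) \<in> borel_measurable M"
proof -
  have "cnj \<in> borel_measurable borel"
    by (rule borel_measurable_continuous_onI, rule continuous_on_cnj, rule continuous_on_id)
  from measurable_compose[OF assms this] show ?thesis by (simp add: o_def)
qed

lemma meas_cinner:
  fixes F G :: "'a \<Rightarrow> complex^'n"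
  assumes "F \<in> borel_measurable M" "G \<in> borel_measurable M"
  shows "(\<lambda>x. cinner (F x) (G x)) \<in> borel_measurable M"
  unfolding cinner_def
  by (intro borel_measurable_sum borel_measurable_times meas_cnj meas_nth assms)
lemma amgm:
  fixes A :: "complex^'n^'n"
  assumes "pos_semidef_mat A"
  shows "cmod (cinner (A *v x) y) \<le> (Re (cinner (A *v x) x) + Re (cinner (A *v y) y)) / 2"
proof -
  have herm: "hermitian_mat A" using assms unfolding pos_semidef_mat_def by blast
  have psd: "\<And>u. Re (cinner (A *v u) u) \<ge> 0" using assms unfolding pos_semidef_mat_def by blast
  define z where "z = cinner (A *v x) y"
  show ?thesis
  proof (cases "z = 0")
    case True then show ?thesis using psd[of x] psd[of y] by (simp add: z_def)
  next
    case False
    define s where "s = z / complex_of_real (cmod z)"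
    define w where "w = x - s *s y"
    have yx: "cinner (A *v y) x = cnj z"
      unfolding z_def using hermitian_cinner[OF herm, of y x] cinner_commute[of "A *v x" y] by simp
    have Aw: "A *v w = A *v x - s *s (A *v y)" by (simp add: w_def vec.diff vec.scale)
    have e0: "cinner (A *v w) w = cinner (A *v x) x - cnj s * z - s * (cinner (A*v y) x - cnj s * cinner (A *v y) y)"
      unfolding Aw unfolding w_def cinner_diff_left cinner_diff_right cinner_scale_left cinner_scale_right z_def
      by (simp add: algebra_simps)
    have e: "cinner (A *v w) w = cinner (A *v x) x - cnj s * z - s * cnj z + (s * cnj s) * cinner (A *v y) y"
      unfolding e0 yx by (simp add: right_diff_distrib)
    have nz: "cmod z \<noteq> 0" using False by simp
    have zz: "z * cnj z = complex_of_real (cmod z) * complex_of_real (cmod z)"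
      by (metis complex_norm_square of_real_mult power2_eq_square)
    have nz': "complex_of_real (cmod z) \<noteq> 0" using nz by simp
    have "cnj s * z = (z * cnj z) / complex_of_real (cmod z)" by (simp add: s_def mult.commute)
    also have "\<dots> = complex_of_real (cmod z)" using nz' unfolding zz by simp
    finally have 1: "cnj s * z = complex_of_real (cmod z)" .
    have "s * cnj z = (z * cnj z) / complex_of_real (cmod z)" by (simp add: s_def)
    also have "\<dots> = complex_of_real (cmod z)" using nz' unfolding zz by simp
    finally have 2: "s * cnj z = complex_of_real (cmod z)" .
    have "s * cnj s = (z * cnj z) / (complex_of_real (cmod z) * complex_of_real (cmod z))" by (simp add: s_def)
    also have "\<dots> = 1" using nz' unfolding zz by simp
    finally have 3: "s * cnj s = 1" .
    have "Re (cinner (A *v w) w) = Re (cinner (A *v x) x) - 2 * cmod z + Re (cinner (A *v y) y)"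
      using e 1 2 3 by simp
    with psd[of w] show ?thesis by (simp add: z_def)
  qed
qed

locale mwf =
  fixes W :: "real \<Rightarrow> complex^'n^'n" and f :: "real \<Rightarrow> complex^'n"
  assumes mw: "matrix_weight W" and fL2: "f \<in> L2W W"
begin

lemma Wmeas[measurable]: "(\<lambda>x. W x $ i $ j) \<in> borel_measurable lborel"
  using mw unfolding matrix_weight_def by blast

lemma fmeas[measurable]: "f \<in> borel_measurable lborel"
  using fL2 unfolding L2W_def by blast

lemma Wpd: "AE x in lborel. pos_def_mat (W x)"
  using mw unfolding matrix_weight_def by blast

lemma Wpsd: "AE x in lborel. pos_semidef_mat (W x)"
  using Wpd
proof eventually_elim
  fix x assume pd: "pos_def_mat (W x)"
  show "pos_semidef_mat (W x)" unfolding pos_semidef_mat_def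
  proof (intro conjI allI)
    show "hermitian_mat (W x)" using pd unfolding pos_def_mat_def by blast
  next
    fix u show "Re (cinner (W x *v u) u) \<ge> 0"
    proof (cases "u = 0")
      case True then show ?thesis by simp
    next
      case False then show ?thesis using pd unfolding pos_def_mat_def by (simp add: less_imp_le)
    qed
  qed
qed

lemma Wloc: "set_integrable lborel {a..b} (\<lambda>x. W x $ i $ j)"
  using mw unfolding matrix_weight_def by blast

lemma Wv_meas[measurable]:
  assumes "g \<in> borel_measurable lborel"
  shows "(\<lambda>x. W x *v g x) \<in> borel_measurable lborel"
proof (rule meas_vec)
  fix i
  have [measurable]: "g \<in> borel_measurable lborel" by (rule assms)
  have [measurable]: "(\<lambda>x. g x $ j) \<in> borel_measurable lborel" for j by (rule meas_nth[OF assms])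
  show "(\<lambda>x. (W x *v g x) $ i) \<in> borel_measurable lborel"
    unfolding matrix_vector_mult_def vec_lambda_beta by measurable
qed

lemma energy_int: "integrable lborel (\<lambda>x. cinner (W x *v f x) (f x))"
  using fL2 unfolding L2W_def by blast

lemma quad_int: "set_integrable lborel {p..q} (\<lambda>x. cinner (W x *v a) b)"
proof -
  have h: "\<And>i j. integrable lborel (\<lambda>x. (indicator {p..q} x *\<^sub>R W x $ i $ j) * (a $ j * cnj (b $ i)))"
    using Wloc unfolding set_integrable_def by (intro integrable_mult_left) blast
  have "integrable lborel (\<lambda>x. \<Sum>i\<in>UNIV. \<Sum>j\<in>UNIV. (indicator {p..q} x *\<^sub>R W x $ i $ j) * (a $ j * cnj (b $ i)))"
    by (rule Bochner_Integration.integrable_sum, rule Bochner_Integration.integrable_sum, rule h)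
  moreover have "\<And>x. (\<Sum>i\<in>UNIV. \<Sum>j\<in>UNIV. (indicator {p..q} x *\<^sub>R W x $ i $ j) * (a $ j * cnj (b $ i)))
      = indicator {p..q} x *\<^sub>R cinner (W x *v a) b"
    by (simp add: cinner_def matrix_vector_mult_def sum_distrib_right mult.assoc scaleR_sum_right)
  ultimately show ?thesis unfolding set_integrable_def by simp
qed

lemma quad_int_sub:
  assumes "S \<in> sets lborel" "S \<subseteq> {p..q}"
  shows "set_integrable lborel S (\<lambda>x. cinner (W x *v a) b)"
  by (rule set_integrable_subset[OF quad_int assms])

end

lemma ind_lincomb:
  fixes h :: "'k \<Rightarrow> 'a \<Rightarrow> complex"
  shows "indicator S x *\<^sub>R (\<Sum>k\<in>K. h k x * c k) = (\<Sum>k\<in>K. (indicator S x *\<^sub>R h k x) * c k)"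
  by (simp add: scaleR_sum_right)

lemma set_integrable_lincomb:
  fixes h :: "'k \<Rightarrow> 'a \<Rightarrow> complex"
  assumes "\<And>k. k \<in> K \<Longrightarrow> set_integrable M S (h k)"
  shows "set_integrable M S (\<lambda>x. \<Sum>k\<in>K. h k x * c k)"
proof -
  have "integrable M (\<lambda>x. \<Sum>k\<in>K. (indicator S x *\<^sub>R h k x) * c k)"
    using assms unfolding set_integrable_def
    by (intro Bochner_Integration.integrable_sum integrable_mult_left) auto
  then show ?thesis unfolding set_integrable_def ind_lincomb .
qed

lemma set_int_lincomb:
  fixes h :: "'k \<Rightarrow> 'a \<Rightarrow> complex"
  assumes "finite K" "\<And>k. k \<in> K \<Longrightarrow> set_integrable M S (h k)"
  shows "(\<Sum>k\<in>K. set_lebesgue_integral M S (h k) * c k) = set_lebesgue_integral M S (\<lambda>x. \<Sum>k\<in>K. h k x * c k)"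
proof -
  have "set_lebesgue_integral M S (\<lambda>x. \<Sum>k\<in>K. h k x * c k) = integral\<^sup>L M (\<lambda>x. \<Sum>k\<in>K. (indicator S x *\<^sub>R h k x) * c k)"
    unfolding set_lebesgue_integral_def ind_lincomb ..
  also have "\<dots> = (\<Sum>k\<in>K. integral\<^sup>L M (\<lambda>x. (indicator S x *\<^sub>R h k x) * c k))"
    using assms(2) unfolding set_integrable_def
    by (intro Bochner_Integration.integral_sum integrable_mult_left) auto
  also have "\<dots> = (\<Sum>k\<in>K. set_lebesgue_integral M S (h k) * c k)"
    unfolding set_lebesgue_integral_def by (rule sum.cong[OF refl], rule integral_mult_left_zero)
  finally show ?thesis by simp
qed

definition Mv :: "(real \<Rightarrow> complex^'n^'n) \<Rightarrow> (real \<Rightarrow> complex^'n) \<Rightarrow> real set \<Rightarrow> complex^'n" where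
  "Mv W f S = (\<chi> i. set_lebesgue_integral lborel S (\<lambda>x. (W x *v f x) $ i))"

context mwf begin

lemma Wf_int:
  assumes S: "S \<in> sets lborel" "S \<subseteq> {p..q}"
  shows "set_integrable lborel S (\<lambda>x. cinner (W x *v f x) a)"
proof -
  define B where "B = (\<lambda>x. indicator S x *\<^sub>R ((Re (cinner (W x *v f x) (f x)) + Re (cinner (W x *v a) a)) / 2))"
  have i1: "integrable lborel (\<lambda>x. indicator S x *\<^sub>R Re (cinner (W x *v f x) (f x)))"
    using energy_int S(1) by (intro integrable_mult_indicator integrable_Re) auto
  have i2: "integrable lborel (\<lambda>x. indicator S x *\<^sub>R Re (cinner (W x *v a) a))"
  proof -
    have "integrable lborel (\<lambda>x. Re (indicator S x *\<^sub>R cinner (W x *v a) a))"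
      using quad_int_sub[OF S, of a a] unfolding set_integrable_def by (rule integrable_Re)
    then show ?thesis by simp
  qed
  have iB: "integrable lborel B"
  proof -
    have "integrable lborel (\<lambda>x. (indicator S x *\<^sub>R Re (cinner (W x *v f x) (f x)) + indicator S x *\<^sub>R Re (cinner (W x *v a) a)) / 2)"
      using i1 i2 by (intro integrable_divide Bochner_Integration.integrable_add)
    moreover have "\<And>x. (indicator S x *\<^sub>R Re (cinner (W x *v f x) (f x)) + indicator S x *\<^sub>R Re (cinner (W x *v a) a)) / 2 = B x"
      unfolding B_def by (simp add: algebra_simps add_divide_distrib)
    ultimately show ?thesis by simp
  qed
  have mf: "(\<lambda>x. cinner (W x *v f x) a) \<in> borel_measurable lborel"
    by (rule meas_cinner[OF Wv_meas[OF fmeas] borel_measurable_const])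
  have mg: "(\<lambda>x. indicator S x *\<^sub>R cinner (W x *v f x) a) \<in> borel_measurable lborel"
    using mf S(1) by measurable
  have "AE x in lborel. norm (indicator S x *\<^sub>R cinner (W x *v f x) a) \<le> norm (B x)"
    using Wpsd
  proof eventually_elim
    fix x assume psd: "pos_semidef_mat (W x)"
    have b: "cmod (cinner (W x *v f x) a) \<le> (Re (cinner (W x *v f x) (f x)) + Re (cinner (W x *v a) a)) / 2"
      by (rule amgm[OF psd])
    then have "0 \<le> (Re (cinner (W x *v f x) (f x)) + Re (cinner (W x *v a) a)) / 2"
      by (meson norm_ge_zero order_trans)
    then show "norm (indicator S x *\<^sub>R cinner (W x *v f x) a) \<le> norm (B x)"
      unfolding B_def using b by (auto simp: indicator_def)
  qed
  then show ?thesis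
    unfolding set_integrable_def by (rule Bochner_Integration.integrable_bound[OF iB mg])
qed

lemma Wf_comp_int:
  assumes S: "S \<in> sets lborel" "S \<subseteq> {p..q}"
  shows "set_integrable lborel S (\<lambda>x. (W x *v f x) $ i)"
proof -
  have ax: "cinner v (axis i 1) = v $ i" for v :: "complex^'n"
  proof -
    have "cinner v (axis i 1) = (\<Sum>j\<in>UNIV. if j = i then v $ i else 0)"
      unfolding cinner_def by (rule sum.cong) (auto simp: axis_def)
    then show ?thesis by simp
  qed
  have "\<And>x. cinner (W x *v f x) (axis i 1) = (W x *v f x) $ i" by (rule ax)
  then show ?thesis using Wf_int[OF S, of "axis i 1"] by simp
qed

lemma Mv_cinner:
  assumes S: "S \<in> sets lborel" "S \<subseteq> {p..q}"
  shows "cinner (Mv W f S) a = set_lebesgue_integral lborel S (\<lambda>x. cinner (W x *v f x) a)"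
proof -
  have "cinner (Mv W f S) a = (\<Sum>i\<in>UNIV. set_lebesgue_integral lborel S (\<lambda>x. (W x *v f x) $ i) * cnj (a $ i))"
    by (simp add: cinner_def Mv_def)
  also have "\<dots> = set_lebesgue_integral lborel S (\<lambda>x. \<Sum>i\<in>UNIV. (W x *v f x) $ i * cnj (a $ i))"
    by (rule set_int_lincomb) (auto intro: Wf_comp_int[OF S])
  finally show ?thesis by (simp add: cinner_def)
qed

lemma Wint_cinner:
  assumes S: "S \<in> sets lborel" "S \<subseteq> {p..q}"
  shows "cinner (Wint W S *v a) b = set_lebesgue_integral lborel S (\<lambda>x. cinner (W x *v a) b)"
proof -
  have int: "set_integrable lborel S (\<lambda>x. W x $ i $ j)" for i j
    by (rule set_integrable_subset[OF Wloc S])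
  have "cinner (Wint W S *v a) b = (\<Sum>i\<in>UNIV. (\<Sum>j\<in>UNIV. set_lebesgue_integral lborel S (\<lambda>x. W x $ i $ j) * a $ j) * cnj (b $ i))"
    by (simp add: cinner_def Wint_def matrix_vector_mult_def)
  also have "\<dots> = (\<Sum>i\<in>UNIV. set_lebesgue_integral lborel S (\<lambda>x. \<Sum>j\<in>UNIV. W x $ i $ j * a $ j) * cnj (b $ i))"
    by (subst set_int_lincomb) (auto intro: int)
  also have "\<dots> = set_lebesgue_integral lborel S (\<lambda>x. \<Sum>i\<in>UNIV. (\<Sum>j\<in>UNIV. W x $ i $ j * a $ j) * cnj (b $ i))"
    by (rule set_int_lincomb) (auto intro!: set_integrable_lincomb int)
  finally show ?thesis by (simp add: cinner_def matrix_vector_mult_def)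
qed

end

context mwf begin

lemma W_herm_AE: "AE x in lborel. W x $ i $ j = cnj (W x $ j $ i)"
  using Wpd
proof eventually_elim
  fix x assume "pos_def_mat (W x)"
  then have "adjoint_mat (W x) = W x" unfolding pos_def_mat_def hermitian_mat_def by blast
  then have "adjoint_mat (W x) $ i $ j = W x $ i $ j" by simp
  then show "W x $ i $ j = cnj (W x $ j $ i)" unfolding adjoint_mat_def by simp
qed

lemma set_integral_cnj: "cnj (set_lebesgue_integral M S g) = set_lebesgue_integral M S (\<lambda>x. cnj (g x))"
  unfolding set_lebesgue_integral_def
proof -
  have "cnj (integral\<^sup>L M (\<lambda>x. indicat_real S x *\<^sub>R g x)) = integral\<^sup>L M (\<lambda>x. cnj (indicat_real S x *\<^sub>R g x))"
    by (rule Bochner_Integration.integral_cnj[symmetric])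
  then show "cnj (integral\<^sup>L M (\<lambda>x. indicat_real S x *\<^sub>R g x)) = integral\<^sup>L M (\<lambda>x. indicat_real S x *\<^sub>R cnj (g x))"
    by (simp add: complex_cnj_scaleR)
qed

lemma Wint_herm:
  assumes S: "S \<in> sets lborel"
  shows "hermitian_mat (Wint W S)"
proof -
  have h: "set_lebesgue_integral lborel S (\<lambda>x. W x $ i $ j) = cnj (set_lebesgue_integral lborel S (\<lambda>x. W x $ j $ i))" for i j
  proof -
    have "set_lebesgue_integral lborel S (\<lambda>x. W x $ i $ j) = set_lebesgue_integral lborel S (\<lambda>x. cnj (W x $ j $ i))"
    proof (rule set_lebesgue_integral_cong_AE[OF S])
      show "(\<lambda>x. W x $ i $ j) \<in> borel_measurable lborel" by simp
      show "(\<lambda>x. cnj (W x $ j $ i)) \<in> borel_measurable lborel" by (rule meas_cnj) simp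
      show "AE x\<in>S in lborel. W x $ i $ j = cnj (W x $ j $ i)"
        using W_herm_AE[of i j] by eventually_elim simp
    qed
    then show ?thesis by (simp add: set_integral_cnj)
  qed
  show ?thesis
    unfolding hermitian_mat_def adjoint_mat_def Wint_def vec_eq_iff
  proof (intro allI)
    fix i j
    show "(\<chi> i j. cnj ((\<chi> i j. set_lebesgue_integral lborel S (\<lambda>x. W x $ i $ j)) $ j $ i)) $ i $ j =
        (\<chi> i j. set_lebesgue_integral lborel S (\<lambda>x. W x $ i $ j)) $ i $ j"
      using h[of j i] by simp
  qed
qed

lemma W_pos_int:
  assumes S: "S \<in> sets lborel" "emeasure lborel S > 0"
    and int: "set_integrable lborel S (\<lambda>x. cinner (W x *v a) a)" and a: "a \<noteq> 0"
  shows "Re (set_lebesgue_integral lborel S (\<lambda>x. cinner (W x *v a) a)) > 0"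
proof (rule ccontr)
  assume le: "\<not> ?thesis"
  define g where "g = (\<lambda>x. indicator S x * Re (cinner (W x *v a) a))"
  have ig: "integrable lborel g"
  proof -
    have "integrable lborel (\<lambda>x. Re (indicator S x *\<^sub>R cinner (W x *v a) a))"
      using int unfolding set_integrable_def by (rule integrable_Re)
    then show ?thesis unfolding g_def by simp
  qed
  have eq: "integral\<^sup>L lborel g = Re (set_lebesgue_integral lborel S (\<lambda>x. cinner (W x *v a) a))"
  proof -
    have "Re (set_lebesgue_integral lborel S (\<lambda>x. cinner (W x *v a) a)) =
        integral\<^sup>L lborel (\<lambda>x. Re (indicator S x *\<^sub>R cinner (W x *v a) a))"
      unfolding set_lebesgue_integral_def
      using int unfolding set_integrable_def by (rule integral_Re[symmetric])
    then show ?thesis unfolding g_def by simp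
  qed
  have nn: "AE x in lborel. 0 \<le> g x"
    using Wpsd by eventually_elim (auto simp: g_def pos_semidef_mat_def indicator_def)
  have "integral\<^sup>L lborel g \<ge> 0" by (rule integral_nonneg_AE[OF nn])
  then have "integral\<^sup>L lborel g = 0" using le eq by simp
  then have "AE x in lborel. g x = 0" using integral_nonneg_eq_0_iff_AE[OF ig nn] by simp
  then have "AE x in lborel. x \<notin> S"
    using Wpd
  proof eventually_elim
    fix x assume "g x = 0" "pos_def_mat (W x)"
    then show "x \<notin> S" using a unfolding g_def pos_def_mat_def by (auto simp: indicator_def)
  qed
  then have "emeasure lborel S = 0"
    using AE_iff_measurable[OF S(1), of "\<lambda>x. x \<notin> S"] by simp
  then show False using S(2) by simp
qed

lemma Wint_pd:
  assumes S: "S \<in> sets lborel" "S \<subseteq> {p..q}" "emeasure lborel S > 0"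
  shows "pos_def_mat (Wint W S)"
  unfolding pos_def_mat_def
proof (intro conjI allI impI)
  show "hermitian_mat (Wint W S)" by (rule Wint_herm[OF S(1)])
next
  fix a :: "complex^'n" assume "a \<noteq> 0"
  then show "Re (cinner (Wint W S *v a) a) > 0"
    unfolding Wint_cinner[OF S(1,2)]
    by (intro W_pos_int S(1,3) quad_int_sub[OF S(1,2)])
qed

end

lemma dyadic_eq: "dyadic (n, k) = {real_of_int k / 2 powi n ..< real_of_int (k + 1) / 2 powi n}"
  by (simp add: dyadic_def)

lemma powi_suc: "(2::real) powi (n + 1) = 2 * 2 powi n"
  by (simp add: power_int_add_1)

lemma dyadic_left_eq: "dyadic_left (n, k) = {real_of_int k / 2 powi n ..< (2 * real_of_int k + 1) / (2 * 2 powi n)}"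
proof -
  have "real_of_int (2 * k) / (2 * 2 powi n) = real_of_int k / 2 powi n" by simp
  then show ?thesis by (simp add: dyadic_left_def dyadic_def powi_suc)
qed

lemma dyadic_right_eq: "dyadic_right (n, k) = {(2 * real_of_int k + 1) / (2 * 2 powi n) ..< real_of_int (k + 1) / 2 powi n}"
proof -
  have "real_of_int (2 * k + 1 + 1) / (2 * 2 powi n) = real_of_int (k + 1) / 2 powi n" by (simp add: field_simps)
  then show ?thesis by (simp add: dyadic_right_def dyadic_def powi_suc)
qed

lemma dyadic_split:
  "dyadic J = dyadic_left J \<union> dyadic_right J" "dyadic_left J \<inter> dyadic_right J = {}"
proof -
  obtain n k where J: "J = (n, k)" by (cases J)
  have p: "(2::real) powi n > 0" by simp
  let ?a = "real_of_int k / 2 powi n" and ?m = "(2 * real_of_int k + 1) / (2 * 2 powi n)"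
    and ?b = "real_of_int (k + 1) / 2 powi n"
  have am: "?a \<le> ?m" using p by (simp add: field_simps)
  have mb: "?m \<le> ?b" using p by (simp add: field_simps)
  show "dyadic J = dyadic_left J \<union> dyadic_right J"
    unfolding J dyadic_eq dyadic_left_eq dyadic_right_eq using am mb by auto
  show "dyadic_left J \<inter> dyadic_right J = {}"
    unfolding J dyadic_left_eq dyadic_right_eq by auto
qed

lemma dyadic_bounded: "\<exists>p q. dyadic J \<subseteq> {p..q}"
proof -
  obtain n k where J: "J = (n, k)" by (cases J)
  show ?thesis
    by (rule exI[of _ "real_of_int k / 2 powi n"], rule exI[of _ "real_of_int (k + 1) / 2 powi n"])
      (auto simp: J dyadic_eq)
qed

lemma dyadic_sets[measurable]: "dyadic J \<in> sets lborel"
  by (cases J) (simp add: dyadic_eq)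

lemma dyadic_left_sets[measurable]: "dyadic_left J \<in> sets lborel"
  by (cases J) (simp add: dyadic_left_eq)

lemma dyadic_right_sets[measurable]: "dyadic_right J \<in> sets lborel"
  by (cases J) (simp add: dyadic_right_eq)

lemma dyadic_left_sub: "dyadic_left J \<subseteq> dyadic J" and dyadic_right_sub: "dyadic_right J \<subseteq> dyadic J"
  using dyadic_split[of J] by auto

lemma dyadic_pos: "emeasure lborel (dyadic J) > 0"
proof -
  obtain n k where J: "J = (n, k)" by (cases J)
  have p: "(2::real) powi n > 0" by simp
  have "real_of_int k / 2 powi n < real_of_int (k + 1) / 2 powi n"
    using p by (simp add: divide_strict_right_mono)
  then show ?thesis unfolding J dyadic_eq by (simp add: emeasure_lborel_Ico)
qed

lemma dyadic_left_pos: "emeasure lborel (dyadic_left J) > 0"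
  by (cases J) (simp add: dyadic_left_def dyadic_pos)

lemma dyadic_right_pos: "emeasure lborel (dyadic_right J) > 0"
  by (cases J) (simp add: dyadic_right_def dyadic_pos)

context mwf begin

lemma Wint_split: "Wint W (dyadic J) = Wint W (dyadic_right J) + Wint W (dyadic_left J)"
proof -
  obtain p q where pq: "dyadic J \<subseteq> {p..q}" using dyadic_bounded by blast
  have int: "set_integrable lborel S (\<lambda>x. W x $ i $ j)" if "S \<subseteq> dyadic J" "S \<in> sets lborel" for S i j
    using that pq by (intro set_integrable_subset[OF Wloc]) auto
  have "set_lebesgue_integral lborel (dyadic J) (\<lambda>x. W x $ i $ j) =
      set_lebesgue_integral lborel (dyadic_right J) (\<lambda>x. W x $ i $ j) + set_lebesgue_integral lborel (dyadic_left J) (\<lambda>x. W x $ i $ j)" for i j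
  proof -
    have iL: "set_integrable lborel (dyadic_left J) (\<lambda>x. W x $ i $ j)"
      by (rule int[OF dyadic_left_sub dyadic_left_sets])
    have iR: "set_integrable lborel (dyadic_right J) (\<lambda>x. W x $ i $ j)"
      by (rule int[OF dyadic_right_sub dyadic_right_sets])
    show ?thesis unfolding dyadic_split(1)[of J]
      using set_integral_Un[OF dyadic_split(2)[of J] iL iR] by (simp add: add.commute)
  qed
  then show ?thesis unfolding Wint_def by (simp add: vec_eq_iff)
qed

lemma Mv_split: "Mv W f (dyadic J) = Mv W f (dyadic_right J) + Mv W f (dyadic_left J)"
proof -
  obtain p q where pq: "dyadic J \<subseteq> {p..q}" using dyadic_bounded by blast
  have int: "set_integrable lborel S (\<lambda>x. (W x *v f x) $ i)" if "S \<subseteq> dyadic J" "S \<in> sets lborel" for S i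
    using that pq by (intro Wf_comp_int) auto
  have "set_lebesgue_integral lborel (dyadic J) (\<lambda>x. (W x *v f x) $ i) =
      set_lebesgue_integral lborel (dyadic_right J) (\<lambda>x. (W x *v f x) $ i) + set_lebesgue_integral lborel (dyadic_left J) (\<lambda>x. (W x *v f x) $ i)" for i
  proof -
    have iL: "set_integrable lborel (dyadic_left J) (\<lambda>x. (W x *v f x) $ i)"
      by (rule int[OF dyadic_left_sub dyadic_left_sets])
    have iR: "set_integrable lborel (dyadic_right J) (\<lambda>x. (W x *v f x) $ i)"
      by (rule int[OF dyadic_right_sub dyadic_right_sets])
    show ?thesis unfolding dyadic_split(1)[of J]
      using set_integral_Un[OF dyadic_split(2)[of J] iL iR] by (simp add: add.commute)
  qed
  then show ?thesis unfolding Mv_def by (simp add: vec_eq_iff)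
qed

lemma Wint_dyadic_pd: "pos_def_mat (Wint W (dyadic J))"
proof -
  obtain p q where pq: "dyadic J \<subseteq> {p..q}" using dyadic_bounded by blast
  show ?thesis by (rule Wint_pd[OF dyadic_sets pq dyadic_pos])
qed

lemma Wint_left_pd: "pos_def_mat (Wint W (dyadic_left J))"
proof -
  obtain p q where pq: "dyadic J \<subseteq> {p..q}" using dyadic_bounded by blast
  have "dyadic_left J \<subseteq> {p..q}" using pq dyadic_left_sub by blast
  then show ?thesis by (rule Wint_pd[OF dyadic_left_sets _ dyadic_left_pos])
qed

lemma Wint_right_pd: "pos_def_mat (Wint W (dyadic_right J))"
proof -
  obtain p q where pq: "dyadic J \<subseteq> {p..q}" using dyadic_bounded by blast
  have "dyadic_right J \<subseteq> {p..q}" using pq dyadic_right_sub by blast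
  then show ?thesis by (rule Wint_pd[OF dyadic_right_sets _ dyadic_right_pos])
qed

lemma haar_matrix_pos:
  assumes "x \<noteq> 0"
  shows "Im (cinner (haar_matrix W J *v x) x) = 0 \<and> Re (cinner (haar_matrix W J *v x) x) > 0"
proof -
  let ?B = "Wint W (dyadic_right J)" and ?C = "Wint W (dyadic_left J)"
  let ?Bi = "matrix_inv ?B"
  have Bpd: "pos_def_mat ?B" by (rule Wint_right_pd)
  have Cpd: "pos_def_mat ?C" by (rule Wint_left_pd)
  define y where "y = ?C *v x"
  define z where "z = ?Bi *v y"
  have Bz: "?B *v z = y" unfolding z_def
    by (simp add: matrix_vector_mul_assoc pd_inverse(1)[OF Bpd])
  have "haar_matrix W J *v x = (?B + ?C) *v z"
    unfolding haar_matrix_def Wint_split z_def y_def by (simp add: matrix_vector_mul_assoc matrix_mul_assoc)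
  also have "\<dots> = y + ?C *v z" by (simp add: matrix_vector_mult_add_rdistrib Bz)
  finally have Hx: "haar_matrix W J *v x = y + ?C *v z" .
  have Cherm: "hermitian_mat ?C" using Cpd unfolding pos_def_mat_def by blast
  have Bherm: "hermitian_mat ?B" using Bpd unfolding pos_def_mat_def by blast
  have "cinner (haar_matrix W J *v x) x = cinner (?C *v x) x + cinner (?C *v z) x"
    unfolding Hx y_def by (simp add: cinner_add_left)
  also have "cinner (?C *v z) x = cinner z (?C *v x)" by (rule hermitian_cinner[OF Cherm])
  also have "\<dots> = cinner z (?B *v z)" using Bz y_def by simp
  also have "\<dots> = cnj (cinner (?B *v z) z)" by (rule cinner_commute)
  finally have e: "cinner (haar_matrix W J *v x) x = cinner (?C *v x) x + cnj (cinner (?B *v z) z)" .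
  have c1: "Im (cinner (?C *v x) x) = 0" by (rule hermitian_cinner_real[OF Cherm])
  have c2: "Re (cinner (?C *v x) x) > 0" using Cpd assms unfolding pos_def_mat_def by blast
  have b1: "Im (cinner (?B *v z) z) = 0" by (rule hermitian_cinner_real[OF Bherm])
  have b2: "Re (cinner (?B *v z) z) \<ge> 0"
    using Bpd unfolding pos_def_mat_def by (cases "z = 0") (auto intro: less_imp_le)
  show ?thesis unfolding e using c1 c2 b1 b2 by simp
qed

lemma haar_weight_nz:
  assumes "orthonormal_eigenbasis (haar_matrix W J) (v J)"
  shows "haar_weight W J (v J j) \<noteq> 0"
  unfolding haar_weight_def using mat_sqrt_eig[OF assms haar_matrix_pos] by simp

end

context mwf begin

lemma cinner_if_right: "cinner y (if P then w else 0) = complex_of_real (indicator {x. P} z) * cinner y w"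
  by (simp add: indicator_def)

lemma haar_inner:
  "l2w_inner W f (haar_fun W J u) =
     cnj (complex_of_real (1 / haar_weight W J u)) *
       (cinner (Mv W f (dyadic_right J)) ((matrix_inv (Wint W (dyadic_right J)) ** Wint W (dyadic_left J)) *v u)
        - cinner (Mv W f (dyadic_left J)) u)"
proof -
  let ?s = "complex_of_real (1 / haar_weight W J u)"
  let ?A = "matrix_inv (Wint W (dyadic_right J)) ** Wint W (dyadic_left J)"
  let ?R = "dyadic_right J" and ?L = "dyadic_left J"
  define g1 where "g1 = (\<lambda>x. indicator ?R x *\<^sub>R cinner (W x *v f x) (?A *v u))"
  define g2 where "g2 = (\<lambda>x. indicator ?L x *\<^sub>R cinner (W x *v f x) u)"
  obtain p q where pq: "dyadic J \<subseteq> {p..q}" using dyadic_bounded by blast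
  have R: "?R \<subseteq> {p..q}" using pq dyadic_right_sub by blast
  have L: "?L \<subseteq> {p..q}" using pq dyadic_left_sub by blast
  have i1: "integrable lborel g1"
    using Wf_int[OF dyadic_right_sets R] unfolding set_integrable_def g1_def .
  have i2: "integrable lborel g2"
    using Wf_int[OF dyadic_left_sets L] unfolding set_integrable_def g2_def .
  have pt: "cinner (W x *v f x) (haar_fun W J u x) = cnj ?s * (g1 x - g2 x)" for x
    unfolding haar_fun_def g1_def g2_def
    by (simp add: cinner_scale_right cinner_diff_right indicator_def scaleR_conv_of_real diff_divide_distrib)
  have "l2w_inner W f (haar_fun W J u) = integral\<^sup>L lborel (\<lambda>x. cnj ?s * (g1 x - g2 x))"
    unfolding l2w_inner_def pt ..
  also have "\<dots> = cnj ?s * (integral\<^sup>L lborel g1 - integral\<^sup>L lborel g2)"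
    using i1 i2 by simp
  also have "integral\<^sup>L lborel g1 = cinner (Mv W f ?R) (?A *v u)"
    unfolding Mv_cinner[OF dyadic_right_sets R] g1_def set_lebesgue_integral_def ..
  also have "integral\<^sup>L lborel g2 = cinner (Mv W f ?L) u"
    unfolding Mv_cinner[OF dyadic_left_sets L] g2_def set_lebesgue_integral_def ..
  finally show ?thesis .
qed

end

locale mwfo = mwf W f for W :: "real \<Rightarrow> complex^'n^'n" and f +
  fixes v :: "int \<times> int \<Rightarrow> 'n \<Rightarrow> complex^'n" and E1 E2 :: "(complex^'n) set"
  assumes eig: "\<And>J. orthonormal_eigenbasis (haar_matrix W J) (v J)"
    and orth: "\<And>h. h \<in> haar_system W v E1 E2 \<Longrightarrow> l2w_inner W f h = 0"
begin

lemma onbv: "orthonormal_family (v J)"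
  using eig[of J] unfolding orthonormal_eigenbasis_def by blast

lemma haar_orth_eq:
  "cinner (Mv W f (dyadic_right J)) ((matrix_inv (Wint W (dyadic_right J)) ** Wint W (dyadic_left J)) *v v J j)
     = cinner (Mv W f (dyadic_left J)) (v J j)"
proof -
  have "haar_fun W J (v J j) \<in> haar_system W v E1 E2"
    unfolding haar_system_def by blast
  then have "l2w_inner W f (haar_fun W J (v J j)) = 0" by (rule orth)
  moreover have "cnj (complex_of_real (1 / haar_weight W J (v J j))) \<noteq> 0"
    using haar_weight_nz[where v=v and J=J, OF eig[of J]] by simp
  ultimately show ?thesis unfolding haar_inner by simp
qed

lemma descend:
  assumes "Mv W f (dyadic J) = Wint W (dyadic J) *v c"
  shows "Mv W f (dyadic_right J) = Wint W (dyadic_right J) *v c"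
    "Mv W f (dyadic_left J) = Wint W (dyadic_left J) *v c"
proof -
  let ?B = "Wint W (dyadic_right J)" and ?C = "Wint W (dyadic_left J)"
  let ?Bi = "matrix_inv ?B"
  have Bpd: "pos_def_mat ?B" by (rule Wint_right_pd)
  have Cpd: "pos_def_mat ?C" by (rule Wint_left_pd)
  have Cherm: "hermitian_mat ?C" using Cpd unfolding pos_def_mat_def by blast
  have Bherm: "hermitian_mat ?B" using Bpd unfolding pos_def_mat_def by blast
  define a where "a = ?Bi *v Mv W f (dyadic_right J)"
  have Ba: "?B *v a = Mv W f (dyadic_right J)" unfolding a_def
    by (simp add: matrix_vector_mul_assoc pd_inverse(1)[OF Bpd])
  have BBi: "?B *v (?Bi *v y) = y" for y
    by (simp add: matrix_vector_mul_assoc pd_inverse(1)[OF Bpd])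
  have "cinner (?C *v a - Mv W f (dyadic_left J)) (v J j) = 0" for j
  proof -
    have "cinner (Mv W f (dyadic_right J)) ((?Bi ** ?C) *v v J j) = cinner (?B *v a) (?Bi *v (?C *v v J j))"
      by (simp add: Ba matrix_vector_mul_assoc)
    also have "\<dots> = cinner a (?B *v (?Bi *v (?C *v v J j)))" by (rule hermitian_cinner[OF Bherm])
    also have "\<dots> = cinner a (?C *v v J j)" by (simp add: BBi)
    also have "\<dots> = cinner (?C *v a) (v J j)" by (rule hermitian_cinner[OF Cherm, symmetric])
    finally have "cinner (?C *v a) (v J j) = cinner (Mv W f (dyadic_left J)) (v J j)"
      using haar_orth_eq[of J j] by simp
    then show ?thesis by (simp add: cinner_diff_left)
  qed
  then have "?C *v a - Mv W f (dyadic_left J) = 0" by (rule onb_complete[OF onbv])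
  then have Ca: "Mv W f (dyadic_left J) = ?C *v a" by simp
  have "Wint W (dyadic J) *v a = Mv W f (dyadic J)"
    unfolding Wint_split Mv_split matrix_vector_mult_add_rdistrib Ba Ca ..
  then have "Wint W (dyadic J) *v (a - c) = 0" using assms by (simp add: vec.diff)
  then have "a - c = 0" by (rule pd_inj[OF Wint_dyadic_pd])
  then have ac: "a = c" by simp
  show "Mv W f (dyadic_right J) = ?B *v c" using Ba ac by simp
  show "Mv W f (dyadic_left J) = ?C *v c" using Ca ac by simp
qed

end

context mwfo begin

definition P :: "'n itself \<Rightarrow> complex^'n \<Rightarrow> int \<times> int \<Rightarrow> bool" where
  "P _ c J \<longleftrightarrow> Mv W f (dyadic J) = Wint W (dyadic J) *v c"

lemma P_children:
  assumes "P TYPE('n) c (n, k)"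
  shows "P TYPE('n) c (n + 1, 2 * k)" "P TYPE('n) c (n + 1, 2 * k + 1)"
  using descend[of "(n, k)" c] assms unfolding P_def dyadic_left_def dyadic_right_def by auto

lemma top_const:
  assumes child: "\<And>N. dyadic (- int N, k0) = dyadic_left (- int (Suc N), k0) \<or>
                       dyadic (- int N, k0) = dyadic_right (- int (Suc N), k0)"
  shows "\<exists>c. \<forall>N. P TYPE('n) c (- int N, k0)"
proof -
  define D where "D = (\<lambda>N. dyadic (- int N, k0))"
  define c where "c = matrix_inv (Wint W (D 0)) *v Mv W f (D 0)"
  have inv: "Wint W (D N) *v (matrix_inv (Wint W (D N)) *v y) = y" for N y
    unfolding D_def by (simp add: matrix_vector_mul_assoc pd_inverse(1)[OF Wint_dyadic_pd])
  have "Mv W f (D N) = Wint W (D N) *v c" for N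
  proof (induction N)
    case 0 then show ?case unfolding c_def inv ..
  next
    case (Suc N)
    define c' where "c' = matrix_inv (Wint W (D (Suc N))) *v Mv W f (D (Suc N))"
    have top: "Mv W f (D (Suc N)) = Wint W (D (Suc N)) *v c'" unfolding c'_def inv ..
    have "Mv W f (D N) = Wint W (D N) *v c'"
      using child[of N] descend[of "(- int (Suc N), k0)" c'] top unfolding D_def by auto
    then have "Wint W (D N) *v (c' - c) = 0" using Suc.IH by (simp add: vec.diff)
    then have "c' - c = 0" unfolding D_def by (rule pd_inj[OF Wint_dyadic_pd])
    then show ?case using top by simp
  qed
  then show ?thesis unfolding P_def D_def by blast
qed

lemma desc_all:
  assumes top: "\<And>N. P TYPE('n) c (- int N, k0)"
    and Q0: "\<And>k. Q 0 k \<Longrightarrow> k = k0"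
    and QS: "\<And>m k. Q (Suc m) k \<Longrightarrow> Q m (k div 2)"
  shows "Q m k \<Longrightarrow> P TYPE('n) c (int m - int N, k)"
proof (induction m arbitrary: k)
  case 0 then show ?case using Q0 top by auto
next
  case (Suc m)
  have IH: "P TYPE('n) c (int m - int N, k div 2)" using Suc.IH QS Suc.prems by blast
  have e: "int (Suc m) - int N = (int m - int N) + 1" by simp
  have "k = 2 * (k div 2) \<or> k = 2 * (k div 2) + 1" by presburger
  then show ?case unfolding e using P_children[OF IH] by auto
qed

lemma pos_all: "\<exists>c. \<forall>m k. 0 \<le> k \<longrightarrow> P TYPE('n) c (int m, k)"
proof -
  have child: "dyadic (- int N, 0) = dyadic_left (- int (Suc N), 0)" for N
    by (simp add: dyadic_left_def)
  obtain c where top: "\<And>N. P TYPE('n) c (- int N, 0)" using top_const[of 0] child by blast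
  have "P TYPE('n) c (int m, k)" if "0 \<le> k" for m k
  proof -
    let ?N = "nat k"
    have lt: "k < 2 ^ (m + ?N)"
    proof -
      have "k < 2 ^ nat k" using that by (metis less_exp of_nat_less_iff nat_0_le of_nat_numeral of_nat_power)
      also have "(2::int) ^ nat k \<le> 2 ^ (m + nat k)" by (rule power_increasing) auto
      finally show ?thesis .
    qed
    have "P TYPE('n) c (int (m + ?N) - int ?N, k)"
    proof (rule desc_all[where Q="\<lambda>m k. 0 \<le> k \<and> k < 2 ^ m", OF top])
      show "\<And>k::int. 0 \<le> k \<and> k < 2 ^ 0 \<Longrightarrow> k = 0" by auto
      have d: "\<And>t k::int. 0 \<le> k \<Longrightarrow> k < 2*t \<Longrightarrow> 0 \<le> k div 2 \<and> k div 2 < t" by presburger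
      show "\<And>m (k::int). 0 \<le> k \<and> k < 2 ^ Suc m \<Longrightarrow> 0 \<le> k div 2 \<and> k div 2 < 2 ^ m"
        using d by simp
      show "0 \<le> k \<and> k < 2 ^ (m + nat k)" using that lt by simp
    qed
    then show ?thesis by simp
  qed
  then show ?thesis by blast
qed

lemma neg_all: "\<exists>c. \<forall>m k. k < 0 \<longrightarrow> P TYPE('n) c (int m, k)"
proof -
  have child: "dyadic (- int N, -1) = dyadic_right (- int (Suc N), -1)" for N
    by (simp add: dyadic_right_def)
  obtain c where top: "\<And>N. P TYPE('n) c (- int N, -1)" using top_const[of "-1"] child by blast
  have "P TYPE('n) c (int m, k)" if "k < 0" for m k
  proof -
    let ?N = "nat (- k)"
    have lt: "- (2 ^ (m + ?N)) \<le> k"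
    proof -
      have "- k < 2 ^ nat (- k)" using that by (metis less_exp of_nat_less_iff nat_0_le of_nat_numeral of_nat_power neg_0_le_iff_le less_imp_le)
      also have "(2::int) ^ nat (- k) \<le> 2 ^ (m + nat (- k))" by (rule power_increasing) auto
      finally show ?thesis by simp
    qed
    have "P TYPE('n) c (int (m + ?N) - int ?N, k)"
    proof (rule desc_all[where Q="\<lambda>m k. - (2 ^ m) \<le> k \<and> k < 0", OF top])
      show "\<And>k::int. - (2 ^ 0) \<le> k \<and> k < 0 \<Longrightarrow> k = -1" by auto
      have d: "\<And>t k::int. - (2*t) \<le> k \<Longrightarrow> k < 0 \<Longrightarrow> - t \<le> k div 2 \<and> k div 2 < 0" by presburger
      show "\<And>m (k::int). - (2 ^ Suc m) \<le> k \<and> k < 0 \<Longrightarrow> - (2 ^ m) \<le> k div 2 \<and> k div 2 < 0"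
        using d by simp
      show "- (2 ^ (m + nat (- k))) \<le> k \<and> k < 0" using that lt by simp
    qed
    then show ?thesis by simp
  qed
  then show ?thesis by blast
qed

end

lemma ind_conv:
  fixes a b x :: real
  assumes A: "A \<longlonglongrightarrow> a" and B: "B \<longlonglongrightarrow> b" and xa: "x \<noteq> a" and xb: "x \<noteq> b"
  shows "(\<lambda>m. indicator {A m..<B m} x :: real) \<longlonglongrightarrow> indicator {a..<b} x"
proof (cases "x < a")
  case True
  have "eventually (\<lambda>m. x < A m) sequentially" by (rule order_tendstoD(1)[OF A True])
  then have "eventually (\<lambda>m. (indicator {A m..<B m} x :: real) = indicator {a..<b} x) sequentially"
    by eventually_elim (use True in \<open>auto simp: indicator_def\<close>)
  then show ?thesis by (rule tendsto_eventually)
next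
  case False
  then have ax: "a < x" using xa by simp
  show ?thesis
  proof (cases "b < x")
    case True
    have "eventually (\<lambda>m. B m < x) sequentially" by (rule order_tendstoD(2)[OF B True])
    then have "eventually (\<lambda>m. (indicator {A m..<B m} x :: real) = indicator {a..<b} x) sequentially"
      by eventually_elim (use True in \<open>auto simp: indicator_def\<close>)
    then show ?thesis by (rule tendsto_eventually)
  next
    case False
    then have bx: "x < b" using xb by simp
    have "eventually (\<lambda>m. A m < x) sequentially" by (rule order_tendstoD(2)[OF A ax])
    moreover have "eventually (\<lambda>m. x < B m) sequentially" by (rule order_tendstoD(1)[OF B bx])
    ultimately have "eventually (\<lambda>m. (indicator {A m..<B m} x :: real) = indicator {a..<b} x) sequentially"
      by eventually_elim (use ax bx in \<open>auto simp: indicator_def\<close>)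
    then show ?thesis by (rule tendsto_eventually)
  qed
qed

lemma D_cont:
  fixes g :: "real \<Rightarrow> real"
  assumes loc: "\<And>a b. set_integrable lborel {a..b} g"
    and A: "A \<longlonglongrightarrow> a" and B: "B \<longlonglongrightarrow> b"
  shows "(\<lambda>m. set_lebesgue_integral lborel {A m..<B m} g) \<longlonglongrightarrow> set_lebesgue_integral lborel {a..<b} g"
proof -
  obtain KA where KA: "\<And>m. norm (A m) \<le> KA" using convergent_imp_Bseq[OF convergentI[OF A]] unfolding Bseq_def by blast
  obtain KB where KB: "\<And>m. norm (B m) \<le> KB" using convergent_imp_Bseq[OF convergentI[OF B]] unfolding Bseq_def by blast
  define C where "C = max KA KB"
  have gm: "g \<in> borel_measurable lborel"
  proof -
    have m: "(\<lambda>x. indicator {- real n .. real n} x *\<^sub>R g x) \<in> borel_measurable lborel" for n :: nat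
      using loc unfolding set_integrable_def by blast
    have l: "(\<lambda>n. indicator {- real n .. real n} x *\<^sub>R g x) \<longlonglongrightarrow> g x" for x
    proof (rule tendsto_eventually)
      obtain N :: nat where "\<bar>x\<bar> \<le> real N" using real_arch_simple by blast
      then show "eventually (\<lambda>n. indicator {- real n .. real n} x *\<^sub>R g x = g x) sequentially"
        unfolding eventually_sequentially by (intro exI[of _ N]) (auto simp: indicator_def)
    qed
    show ?thesis
      by (rule borel_measurable_LIMSEQ_real[where u="\<lambda>n x. indicator {- real n .. real n} x *\<^sub>R g x"])
        (use l m in auto)
  qed
  have iw: "integrable lborel (\<lambda>x. indicator {-C..C} x *\<^sub>R \<bar>g x\<bar>)"
    using set_integrable_abs[OF loc[of "-C" C]] unfolding set_integrable_def .
  show ?thesis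
    unfolding set_lebesgue_integral_def
  proof (rule integral_dominated_convergence[OF _ _ iw])
    show "(\<lambda>x. indicat_real {a..<b} x *\<^sub>R g x) \<in> borel_measurable lborel" using gm by measurable
    show "\<And>i. (\<lambda>x. indicat_real {A i..<B i} x *\<^sub>R g x) \<in> borel_measurable lborel" using gm by measurable
    show "AE x in lborel. (\<lambda>i. indicat_real {A i..<B i} x *\<^sub>R g x) \<longlonglongrightarrow> indicat_real {a..<b} x *\<^sub>R g x"
      using AE_lborel_singleton[of a] AE_lborel_singleton[of b]
    proof eventually_elim
      fix x :: real assume "x \<noteq> a" "x \<noteq> b"
      then show "(\<lambda>i. indicat_real {A i..<B i} x *\<^sub>R g x) \<longlonglongrightarrow> indicat_real {a..<b} x *\<^sub>R g x"
        by (intro tendsto_scaleR tendsto_const ind_conv A B)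
    qed
    show "AE x in lborel. norm (indicat_real {A i..<B i} x *\<^sub>R g x) \<le> indicator {-C..C} x *\<^sub>R \<bar>g x\<bar>" for i
    proof (rule AE_I2)
      fix x
      have "- C \<le> A i" using KA[of i] unfolding C_def by auto
      moreover have "B i \<le> C" using KB[of i] unfolding C_def by auto
      ultimately show "norm (indicat_real {A i..<B i} x *\<^sub>R g x) \<le> indicator {-C..C} x *\<^sub>R \<bar>g x\<bar>"
        by (auto simp: indicator_def)
    qed
  qed
qed

lemma D_sum:
  fixes g :: "real \<Rightarrow> real" and n :: nat
  assumes loc: "\<And>a b. set_integrable lborel {a..b} g"
    and Z: "\<And>k. i \<le> k \<Longrightarrow> k < j \<Longrightarrow> set_lebesgue_integral lborel {real_of_int k / 2^n ..< real_of_int (k+1) / 2^n} g = 0"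
    and ij: "i \<le> j"
  shows "set_lebesgue_integral lborel {real_of_int i / 2^n ..< real_of_int j / 2^n} g = 0"
  using ij Z
proof (induction j rule: int_ge_induct)
  case base then show ?case by (simp add: set_lebesgue_integral_def)
next
  case (step j)
  let ?a = "real_of_int i / 2^n" and ?b = "real_of_int j / 2^n" and ?c = "real_of_int (j+1) / 2^n"
  have ab: "?a \<le> ?b" using step.hyps by (simp add: divide_right_mono)
  have bc: "?b \<le> ?c" by (simp add: divide_right_mono)
  have un: "{?a..<?c} = {?a..<?b} \<union> {?b..<?c}" using ab bc by auto
  have dj: "{?a..<?b} \<inter> {?b..<?c} = {}" by auto
  have i1: "set_integrable lborel {?a..<?b} g" by (rule set_integrable_subset[OF loc[of ?a ?b]]) auto
  have i2: "set_integrable lborel {?b..<?c} g" by (rule set_integrable_subset[OF loc[of ?b ?c]]) auto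
  have "set_lebesgue_integral lborel {?a..<?c} g = set_lebesgue_integral lborel {?a..<?b} g + set_lebesgue_integral lborel {?b..<?c} g"
    unfolding un by (rule set_integral_Un[OF dj i1 i2])
  also have "set_lebesgue_integral lborel {?a..<?b} g = 0" using step by auto
  also have "set_lebesgue_integral lborel {?b..<?c} g = 0" using step by auto
  finally show ?case by simp
qed

definition dapprox :: "nat \<Rightarrow> real \<Rightarrow> real" where
  "dapprox m x = real_of_int \<lfloor>x * 2^m\<rfloor> / 2^m"

lemma dapprox_le: "dapprox m x \<le> x"
proof -
  have "real_of_int \<lfloor>x * 2^m\<rfloor> \<le> x * 2^m" by (rule of_int_floor_le)
  then show ?thesis unfolding dapprox_def by (simp add: divide_le_eq)
qed

lemma dapprox_gt: "x - 1 / 2^m < dapprox m x"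
proof -
  have "x * 2^m < real_of_int \<lfloor>x * 2^m\<rfloor> + 1" by (rule real_of_int_floor_add_one_gt)
  then have "x * 2^m - 1 < real_of_int \<lfloor>x * 2^m\<rfloor>" by simp
  then have "(x * 2^m - 1) / 2^m < real_of_int \<lfloor>x * 2^m\<rfloor> / 2^m" by (simp add: divide_strict_right_mono)
  then show ?thesis unfolding dapprox_def by (simp add: diff_divide_distrib)
qed

lemma dapprox_lim: "(\<lambda>m. dapprox m x) \<longlonglongrightarrow> x"
proof (rule tendsto_sandwich[where f="\<lambda>m. x - 1 / 2^m" and h="\<lambda>m. x"])
  show "eventually (\<lambda>m. x - 1 / 2^m \<le> dapprox m x) sequentially"
    by (intro always_eventually allI less_imp_le dapprox_gt)
  show "eventually (\<lambda>m. dapprox m x \<le> x) sequentially" by (intro always_eventually allI dapprox_le)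
  have "(\<lambda>m. inverse ((2::real)^m)) \<longlonglongrightarrow> 0" by (rule LIMSEQ_inverse_realpow_zero) simp
  then have "(\<lambda>m. 1 / (2::real)^m) \<longlonglongrightarrow> 0" by (simp add: inverse_eq_divide)
  then show "(\<lambda>m. x - 1 / 2^m) \<longlonglongrightarrow> x" using tendsto_diff[OF tendsto_const, of _ 0 sequentially x] by simp
qed simp

lemma dapprox_mono:
  assumes "x \<le> y" shows "dapprox m x \<le> dapprox m y"
proof -
  have "x * 2^m \<le> y * 2^m" using assms by (intro mult_right_mono) simp_all
  then have "\<lfloor>x * 2^m\<rfloor> \<le> \<lfloor>y * 2^m\<rfloor>" by (rule floor_mono)
  then have "real_of_int \<lfloor>x * 2^m\<rfloor> \<le> real_of_int \<lfloor>y * 2^m\<rfloor>" by simp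
  then show ?thesis unfolding dapprox_def by (rule divide_right_mono) simp
qed

lemma D_approx:
  fixes g :: "real \<Rightarrow> real" and R :: "real set"
  assumes loc: "\<And>a b. set_integrable lborel {a..b} g"
    and Z: "\<And>n k. real_of_int k / 2^n \<in> R \<Longrightarrow> real_of_int (k+1) / 2^n \<in> R \<Longrightarrow>
              set_lebesgue_integral lborel {real_of_int k / 2^n ..< real_of_int (k+1) / 2^n} g = 0"
    and floorR: "\<And>m x. x \<in> R \<Longrightarrow> dapprox m x \<in> R"
    and conv: "\<And>x y z. x \<in> R \<Longrightarrow> z \<in> R \<Longrightarrow> x \<le> y \<Longrightarrow> y \<le> z \<Longrightarrow> y \<in> R"
    and aR: "a \<in> R" and bR: "b \<in> R" and ab: "a \<le> b"
  shows "set_lebesgue_integral lborel {a..<b} g = 0"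
proof -
  have zero: "set_lebesgue_integral lborel {dapprox m a..<dapprox m b} g = 0" for m
  proof -
    let ?i = "\<lfloor>a * 2^m\<rfloor>" and ?j = "\<lfloor>b * 2^m\<rfloor>"
    have ij: "?i \<le> ?j"
    proof -
      have "a * 2^m \<le> b * 2^m" using ab by (intro mult_right_mono) simp_all
      then show ?thesis by (rule floor_mono)
    qed
    have "set_lebesgue_integral lborel {real_of_int ?i / 2^m ..< real_of_int ?j / 2^m} g = 0"
    proof (rule D_sum[OF loc _ ij])
      fix k assume k: "?i \<le> k" "k < ?j"
      have A: "dapprox m a \<in> R" "dapprox m b \<in> R" using floorR aR bR by auto
      have "real_of_int ?i \<le> real_of_int k" using k by simp
      then have l1: "dapprox m a \<le> real_of_int k / 2^m" unfolding dapprox_def by (rule divide_right_mono) simp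
      have "real_of_int (k + 1) \<le> real_of_int ?j" using k by simp
      then have l2: "real_of_int (k + 1) / 2^m \<le> dapprox m b" unfolding dapprox_def by (rule divide_right_mono) simp
      have "real_of_int k \<le> real_of_int (k + 1)" by simp
      then have l3: "real_of_int k / 2^m \<le> real_of_int (k + 1) / 2^m" by (rule divide_right_mono) simp
      show "set_lebesgue_integral lborel {real_of_int k / 2^m ..< real_of_int (k+1) / 2^m} g = 0"
      proof (rule Z)
        show "real_of_int k / 2^m \<in> R"
          by (rule conv[OF A(1) A(2) l1]) (rule order_trans[OF l3 l2])
        show "real_of_int (k+1) / 2^m \<in> R"
          by (rule conv[OF A(1) A(2) order_trans[OF l1 l3] l2])
      qed
    qed
    then show ?thesis unfolding dapprox_def .
  qed
  have "(\<lambda>m. set_lebesgue_integral lborel {dapprox m a..<dapprox m b} g) \<longlonglongrightarrow> set_lebesgue_integral lborel {a..<b} g"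
    by (rule D_cont[OF loc dapprox_lim dapprox_lim])
  then show ?thesis unfolding zero LIMSEQ_const_iff by simp
qed

lemma D_AE:
  fixes g :: "real \<Rightarrow> real"
  assumes loc: "\<And>a b. set_integrable lborel {a..b} g"
    and Z: "\<And>a b. p \<le> a \<Longrightarrow> a \<le> b \<Longrightarrow> b \<le> q \<Longrightarrow> set_lebesgue_integral lborel {a..<b} g = 0"
  shows "AE x in lborel. x \<in> {p..<q} \<longrightarrow> g x = 0"
proof -
  define h where "h = (\<lambda>x. indicator {p..<q} x * g x)"
  have ih: "integrable lborel h"
  proof -
    have "{p..<q} \<subseteq> {p..q}" by auto
    then have "set_integrable lborel {p..<q} g" by (intro set_integrable_subset[OF loc[of p q]]) auto
    then show ?thesis unfolding set_integrable_def h_def by simp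
  qed
  have hm[measurable]: "h \<in> borel_measurable lborel" using ih by (rule borel_measurable_integrable)
  have ray: "integral\<^sup>L lborel (\<lambda>y. indicator {x<..} y * h y) = 0" for x
  proof -
    have "integral\<^sup>L lborel (\<lambda>y. indicator {x<..} y * h y) = integral\<^sup>L lborel (\<lambda>y. indicator {max x p..<q} y * g y)"
    proof (rule integral_cong_AE)
      show "(\<lambda>y. indicator {x<..} y * h y) \<in> borel_measurable lborel" by measurable
      have "(\<lambda>y. indicator {max x p..<q} y * g y) = (\<lambda>y. indicator {x..} y * h y)"
        by (auto simp: h_def indicator_def fun_eq_iff)
      then show "(\<lambda>y. indicator {max x p..<q} y * g y) \<in> borel_measurable lborel" by simp
      show "AE y in lborel. indicator {x<..} y * h y = indicator {max x p..<q} y * g y"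
        using AE_lborel_singleton[of x] by eventually_elim (auto simp: h_def indicator_def)
    qed
    also have "\<dots> = 0"
    proof (cases "max x p \<le> q")
      case True
      have "set_lebesgue_integral lborel {max x p..<q} g = 0" by (rule Z) (use True in auto)
      then show ?thesis unfolding set_lebesgue_integral_def by simp
    next
      case False then have e: "{max x p..<q} = {}" by auto
      show ?thesis unfolding e by simp
    qed
    finally show ?thesis .
  qed
  define hp where "hp = (\<lambda>y. (\<bar>h y\<bar> + h y) / 2)"
  define hn where "hn = (\<lambda>y. (\<bar>h y\<bar> - h y) / 2)"
  have ihp: "integrable lborel hp" unfolding hp_def using ih by (intro integrable_divide Bochner_Integration.integrable_add integrable_abs)
  have ihn: "integrable lborel hn" unfolding hn_def using ih by (intro integrable_divide Bochner_Integration.integrable_diff integrable_abs)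
  have hpm[measurable]: "hp \<in> borel_measurable lborel" unfolding hp_def by measurable
  have hnm[measurable]: "hn \<in> borel_measurable lborel" unfolding hn_def by measurable
  have em: "emeasure (density lborel (\<lambda>y. ennreal (k y))) {x<..} = ennreal (integral\<^sup>L lborel (\<lambda>y. k y * indicator {x<..} y))"
    if ik: "integrable lborel k" and nn: "\<And>y. k y \<ge> 0" for k and x :: real
  proof -
    have km[measurable]: "k \<in> borel_measurable lborel" using ik by (rule borel_measurable_integrable)
    have "emeasure (density lborel (\<lambda>y. ennreal (k y))) {x<..} = (\<integral>\<^sup>+ y. ennreal (k y) * indicator {x<..} y \<partial>lborel)"
      by (rule emeasure_density) (auto intro!: borel_open)
    also have "\<dots> = (\<integral>\<^sup>+ y. ennreal (k y * indicator {x<..} y) \<partial>lborel)"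
      by (intro nn_integral_cong) (auto simp: indicator_def)
    also have "\<dots> = ennreal (integral\<^sup>L lborel (\<lambda>y. k y * indicator {x<..} y))"
    proof (rule nn_integral_eq_integral)
      show "integrable lborel (\<lambda>y. k y * indicator {x<..} y)"
        using integrable_mult_indicator[OF _ ik, of "{x<..}"] by (simp add: mult.commute)
      show "AE y in lborel. 0 \<le> k y * indicator {x<..} y" using nn by (simp add: indicator_def)
    qed
    finally show ?thesis .
  qed
  have hpn: "hp y \<ge> 0" "hn y \<ge> 0" for y unfolding hp_def hn_def by auto
  have eqray: "integral\<^sup>L lborel (\<lambda>y. hp y * indicator {x<..} y) = integral\<^sup>L lborel (\<lambda>y. hn y * indicator {x<..} y)" for x
  proof -
    have i1: "integrable lborel (\<lambda>y. hp y * indicator {x<..} y)"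
      using integrable_mult_indicator[OF _ ihp, of "{x<..}"] by (simp add: mult.commute)
    have i2: "integrable lborel (\<lambda>y. hn y * indicator {x<..} y)"
      using integrable_mult_indicator[OF _ ihn, of "{x<..}"] by (simp add: mult.commute)
    have "integral\<^sup>L lborel (\<lambda>y. hp y * indicator {x<..} y) - integral\<^sup>L lborel (\<lambda>y. hn y * indicator {x<..} y)
        = integral\<^sup>L lborel (\<lambda>y. hp y * indicator {x<..} y - hn y * indicator {x<..} y)"
      using i1 i2 by simp
    also have "(\<lambda>y. hp y * indicator {x<..} y - hn y * indicator {x<..} y) = (\<lambda>y. indicator {x<..} y * h y)"
      by (auto simp: hp_def hn_def fun_eq_iff field_simps)
    finally show ?thesis using ray[of x] by simp
  qed
  have "density lborel (\<lambda>y. ennreal (hp y)) = density lborel (\<lambda>y. ennreal (hn y))"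
  proof (rule measure_eqI_lessThan)
    show "sets (density lborel (\<lambda>y. ennreal (hp y))) = sets borel" by simp
    show "sets (density lborel (\<lambda>y. ennreal (hn y))) = sets borel" by simp
    show "emeasure (density lborel (\<lambda>y. ennreal (hp y))) {x<..} < \<infinity>" for x
      unfolding em[OF ihp hpn(1)] by simp
    show "emeasure (density lborel (\<lambda>y. ennreal (hp y))) {x<..} = emeasure (density lborel (\<lambda>y. ennreal (hn y))) {x<..}" for x
      unfolding em[OF ihp hpn(1)] em[OF ihn hpn(2)] eqray ..
  qed
  then have "AE y in lborel. ennreal (hp y) = ennreal (hn y)"
    by (subst (asm) sigma_finite_measure.density_unique_iff[OF sigma_finite_lborel]) auto
  then have "AE y in lborel. h y = 0"
    by eventually_elim (use hpn in \<open>auto simp: hp_def hn_def\<close>)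
  then show ?thesis by eventually_elim (auto simp: h_def)
qed

lemma D_pos:
  fixes g :: "real \<Rightarrow> real"
  assumes loc: "\<And>a b. set_integrable lborel {a..b} g"
    and Z: "\<And>n k. 0 \<le> k \<Longrightarrow> set_lebesgue_integral lborel {real_of_int k / 2^n ..< real_of_int (k+1) / 2^n} g = 0"
  shows "AE x in lborel. 0 \<le> x \<longrightarrow> g x = 0"
proof -
  have I: "set_lebesgue_integral lborel {a..<b} g = 0" if "0 \<le> a" "a \<le> b" for a b
  proof (rule D_approx[OF loc, where R="{0..}"])
    fix n k assume "real_of_int k / 2^n \<in> {0::real..}"
    then have "0 \<le> k" using zero_less_power[of "2::real" n, OF zero_less_numeral] by (auto simp: zero_le_divide_iff)
    then show "set_lebesgue_integral lborel {real_of_int k / 2^n ..< real_of_int (k+1) / 2^n} g = 0" by (rule Z)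
  next
    fix m and x :: real assume "x \<in> {0..}"
    then have "0 \<le> x * 2^m" by simp
    then show "dapprox m x \<in> {0..}" unfolding dapprox_def by simp
  qed (use that in auto)
  have h: "AE x in lborel. x \<in> {0..<real N} \<longrightarrow> g x = 0" for N :: nat
    by (rule D_AE[OF loc I]) auto
  have "AE x in lborel. \<forall>N::nat. x \<in> {0..<real N} \<longrightarrow> g x = 0"
    unfolding AE_all_countable using h by blast
  then show ?thesis
  proof eventually_elim
    fix x :: real assume h: "\<forall>N::nat. x \<in> {0..<real N} \<longrightarrow> g x = 0"
    obtain N :: nat where "x < real N" using reals_Archimedean2 by blast
    then show "0 \<le> x \<longrightarrow> g x = 0" using h by auto
  qed
qed

lemma D_neg:
  fixes g :: "real \<Rightarrow> real"
  assumes loc: "\<And>a b. set_integrable lborel {a..b} g"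
    and Z: "\<And>n k. k < 0 \<Longrightarrow> set_lebesgue_integral lborel {real_of_int k / 2^n ..< real_of_int (k+1) / 2^n} g = 0"
  shows "AE x in lborel. x < 0 \<longrightarrow> g x = 0"
proof -
  have I: "set_lebesgue_integral lborel {a..<b} g = 0" if "a \<le> b" "b \<le> 0" for a b
  proof (rule D_approx[OF loc, where R="{..0}"])
    fix n k assume "real_of_int (k+1) / 2^n \<in> {..0::real}"
    then have "real_of_int (k + 1) \<le> 0" using zero_less_power[of "2::real" n, OF zero_less_numeral] by (auto simp: divide_le_0_iff)
    then have "k + 1 \<le> 0" by linarith
    then show "set_lebesgue_integral lborel {real_of_int k / 2^n ..< real_of_int (k+1) / 2^n} g = 0"
      by (intro Z) simp
  next
    fix m and x :: real assume "x \<in> {..0}"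
    then show "dapprox m x \<in> {..0}" using dapprox_le[of m x] by simp
  qed (use that in auto)
  have h: "AE x in lborel. x \<in> {- real N..<0} \<longrightarrow> g x = 0" for N :: nat
    by (rule D_AE[OF loc I]) auto
  have "AE x in lborel. \<forall>N::nat. x \<in> {- real N..<0} \<longrightarrow> g x = 0"
    unfolding AE_all_countable using h by blast
  then show ?thesis
  proof eventually_elim
    fix x :: real assume h: "\<forall>N::nat. x \<in> {- real N..<0} \<longrightarrow> g x = 0"
    obtain N :: nat where N: "- x < real N" using reals_Archimedean2 by blast
    then have "- real N \<le> x" by simp
    then show "x < 0 \<longrightarrow> g x = 0" using h[rule_format, of N] by auto
  qed
qed

lemma cplx_int:
  fixes g :: "real \<Rightarrow> complex"
  assumes "set_integrable lborel S g"
  shows "set_integrable lborel S (\<lambda>x. Re (g x))" "set_integrable lborel S (\<lambda>x. Im (g x))"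
proof -
  have i: "integrable lborel (\<lambda>x. indicator S x *\<^sub>R g x)" using assms(1) unfolding set_integrable_def .
  have r: "integrable lborel (\<lambda>x. Re (indicator S x *\<^sub>R g x))" using i by (rule integrable_Re)
  have m: "integrable lborel (\<lambda>x. Im (indicator S x *\<^sub>R g x))" using i by (rule integrable_Im)
  show "set_integrable lborel S (\<lambda>x. Re (g x))" using r unfolding set_integrable_def by simp
  show "set_integrable lborel S (\<lambda>x. Im (g x))" using m unfolding set_integrable_def by simp
qed

lemma cplx_parts:
  fixes g :: "real \<Rightarrow> complex"
  assumes "set_integrable lborel S g" "set_lebesgue_integral lborel S g = 0"
  shows "set_integrable lborel S (\<lambda>x. Re (g x))" "set_lebesgue_integral lborel S (\<lambda>x. Re (g x)) = 0"
    "set_integrable lborel S (\<lambda>x. Im (g x))" "set_lebesgue_integral lborel S (\<lambda>x. Im (g x)) = 0"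
proof -
  have i: "integrable lborel (\<lambda>x. indicator S x *\<^sub>R g x)" using assms(1) unfolding set_integrable_def .
  have r: "integrable lborel (\<lambda>x. Re (indicator S x *\<^sub>R g x))" using i by (rule integrable_Re)
  have m: "integrable lborel (\<lambda>x. Im (indicator S x *\<^sub>R g x))" using i by (rule integrable_Im)
  show "set_integrable lborel S (\<lambda>x. Re (g x))" using r unfolding set_integrable_def by simp
  show "set_integrable lborel S (\<lambda>x. Im (g x))" using m unfolding set_integrable_def by simp
  have "set_lebesgue_integral lborel S (\<lambda>x. Re (g x)) = Re (set_lebesgue_integral lborel S g)"
    unfolding set_lebesgue_integral_def using integral_Re[OF i] by simp
  then show "set_lebesgue_integral lborel S (\<lambda>x. Re (g x)) = 0" using assms(2) by simp
  have "set_lebesgue_integral lborel S (\<lambda>x. Im (g x)) = Im (set_lebesgue_integral lborel S g)"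
    unfolding set_lebesgue_integral_def using integral_Im[OF i] by simp
  then show "set_lebesgue_integral lborel S (\<lambda>x. Im (g x)) = 0" using assms(2) by simp
qed

lemma dy_int:
  fixes g :: "real \<Rightarrow> complex"
  assumes loc: "\<And>a b. set_integrable lborel {a..b} g"
  shows "set_integrable lborel {real_of_int k / 2^n ..< real_of_int (k+1) / 2^n} g"
  by (rule set_integrable_subset[OF loc[of "real_of_int k / 2^n" "real_of_int (k+1) / 2^n"]]) auto

lemma D_pos_c:
  fixes g :: "real \<Rightarrow> complex"
  assumes loc: "\<And>a b. set_integrable lborel {a..b} g"
    and Z: "\<And>n k. 0 \<le> k \<Longrightarrow> set_lebesgue_integral lborel {real_of_int k / 2^n ..< real_of_int (k+1) / 2^n} g = 0"
  shows "AE x in lborel. 0 \<le> x \<longrightarrow> g x = 0"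
proof -
  have "AE x in lborel. 0 \<le> x \<longrightarrow> Re (g x) = 0"
  proof (rule D_pos)
    show "set_integrable lborel {a..b} (\<lambda>x. Re (g x))" for a b by (rule cplx_int(1)[OF loc])
    show "set_lebesgue_integral lborel {real_of_int k / 2^n ..< real_of_int (k+1) / 2^n} (\<lambda>x. Re (g x)) = 0"
      if "0 \<le> k" for n k by (rule cplx_parts(2)[OF dy_int[OF loc] Z[OF that]])
  qed
  moreover have "AE x in lborel. 0 \<le> x \<longrightarrow> Im (g x) = 0"
  proof (rule D_pos)
    show "set_integrable lborel {a..b} (\<lambda>x. Im (g x))" for a b by (rule cplx_int(2)[OF loc])
    show "set_lebesgue_integral lborel {real_of_int k / 2^n ..< real_of_int (k+1) / 2^n} (\<lambda>x. Im (g x)) = 0"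
      if "0 \<le> k" for n k by (rule cplx_parts(4)[OF dy_int[OF loc] Z[OF that]])
  qed
  ultimately show ?thesis by eventually_elim (auto simp: complex_eq_iff)
qed

lemma D_neg_c:
  fixes g :: "real \<Rightarrow> complex"
  assumes loc: "\<And>a b. set_integrable lborel {a..b} g"
    and Z: "\<And>n k. k < 0 \<Longrightarrow> set_lebesgue_integral lborel {real_of_int k / 2^n ..< real_of_int (k+1) / 2^n} g = 0"
  shows "AE x in lborel. x < 0 \<longrightarrow> g x = 0"
proof -
  have "AE x in lborel. x < 0 \<longrightarrow> Re (g x) = 0"
  proof (rule D_neg)
    show "set_integrable lborel {a..b} (\<lambda>x. Re (g x))" for a b by (rule cplx_int(1)[OF loc])
    show "set_lebesgue_integral lborel {real_of_int k / 2^n ..< real_of_int (k+1) / 2^n} (\<lambda>x. Re (g x)) = 0"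
      if "k < 0" for n k by (rule cplx_parts(2)[OF dy_int[OF loc] Z[OF that]])
  qed
  moreover have "AE x in lborel. x < 0 \<longrightarrow> Im (g x) = 0"
  proof (rule D_neg)
    show "set_integrable lborel {a..b} (\<lambda>x. Im (g x))" for a b by (rule cplx_int(2)[OF loc])
    show "set_lebesgue_integral lborel {real_of_int k / 2^n ..< real_of_int (k+1) / 2^n} (\<lambda>x. Im (g x)) = 0"
      if "k < 0" for n k by (rule cplx_parts(4)[OF dy_int[OF loc] Z[OF that]])
  qed
  ultimately show ?thesis by eventually_elim (auto simp: complex_eq_iff)
qed

context mwf begin

lemma Wc_loc: "set_integrable lborel {a..b} (\<lambda>x. (W x *v c) $ i)"
proof -
  have "set_integrable lborel {a..b} (\<lambda>x. \<Sum>j\<in>UNIV. W x $ i $ j * c $ j)"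
    by (rule set_integrable_lincomb) (rule Wloc)
  then show ?thesis by (simp add: matrix_vector_mult_def)
qed

lemma g_loc: "set_integrable lborel {a..b} (\<lambda>x. (W x *v (f x - c)) $ i)"
proof -
  have "set_integrable lborel {a..b} (\<lambda>x. (W x *v f x) $ i - (W x *v c) $ i)"
    by (rule set_integral_diff(1)[OF Wf_comp_int Wc_loc]) auto
  then show ?thesis by (simp add: vec.diff)
qed

lemma g_int_zero:
  assumes S: "S \<in> sets lborel" "S \<subseteq> {p..q}"
    and eq: "Mv W f S = Wint W S *v c"
  shows "set_lebesgue_integral lborel S (\<lambda>x. (W x *v (f x - c)) $ i) = 0"
proof -
  have int1: "set_integrable lborel S (\<lambda>x. (W x *v f x) $ i)" by (rule Wf_comp_int[OF S])
  have int2: "set_integrable lborel S (\<lambda>x. (W x *v c) $ i)" by (rule set_integrable_subset[OF Wc_loc S(1,2)])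
  have intW: "set_integrable lborel S (\<lambda>x. W x $ i $ j)" for j by (rule set_integrable_subset[OF Wloc S(1,2)])
  have "(Wint W S *v c) $ i = (\<Sum>j\<in>UNIV. set_lebesgue_integral lborel S (\<lambda>x. W x $ i $ j) * c $ j)"
    by (simp add: Wint_def matrix_vector_mult_def)
  also have "\<dots> = set_lebesgue_integral lborel S (\<lambda>x. \<Sum>j\<in>UNIV. W x $ i $ j * c $ j)"
    by (rule set_int_lincomb) (auto intro: intW)
  also have "\<dots> = set_lebesgue_integral lborel S (\<lambda>x. (W x *v c) $ i)"
    by (simp add: matrix_vector_mult_def)
  finally have e2: "(Wint W S *v c) $ i = set_lebesgue_integral lborel S (\<lambda>x. (W x *v c) $ i)" .
  have e1: "(Mv W f S) $ i = set_lebesgue_integral lborel S (\<lambda>x. (W x *v f x) $ i)"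
    by (simp add: Mv_def)
  have "set_lebesgue_integral lborel S (\<lambda>x. (W x *v (f x - c)) $ i) =
      set_lebesgue_integral lborel S (\<lambda>x. (W x *v f x) $ i - (W x *v c) $ i)"
    by (simp add: vec.diff)
  also have "\<dots> = set_lebesgue_integral lborel S (\<lambda>x. (W x *v f x) $ i) - set_lebesgue_integral lborel S (\<lambda>x. (W x *v c) $ i)"
    by (rule set_integral_diff(2)[OF int1 int2])
  also have "\<dots> = 0" using e1 e2 eq by simp
  finally show ?thesis .
qed

lemma dyadic_nat: "dyadic (int n, k) = {real_of_int k / 2^n ..< real_of_int (k+1) / 2^n}"
  by (simp add: dyadic_def power_int_of_nat)

lemma const_from_P:
  assumes P: "\<And>n k. R k \<Longrightarrow> Mv W f (dyadic (int n, k)) = Wint W (dyadic (int n, k)) *v c"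
  shows "\<And>n k i. R k \<Longrightarrow> set_lebesgue_integral lborel {real_of_int k / 2^n ..< real_of_int (k+1) / 2^n}
            (\<lambda>x. (W x *v (f x - c)) $ i) = 0"
proof -
  fix n k i assume "R k"
  obtain p q where pq: "dyadic (int n, k) \<subseteq> {p..q}" using dyadic_bounded by blast
  show "set_lebesgue_integral lborel {real_of_int k / 2^n ..< real_of_int (k+1) / 2^n}
            (\<lambda>x. (W x *v (f x - c)) $ i) = 0"
    using g_int_zero[OF dyadic_sets pq P[OF \<open>R k\<close>]] unfolding dyadic_nat .
qed

lemma vec_zero_from_AE:
  assumes "\<And>i. AE x in lborel. Q x \<longrightarrow> (W x *v (f x - c)) $ i = 0"
  shows "AE x in lborel. Q x \<longrightarrow> f x = c"
proof -
  have "AE x in lborel. \<forall>i\<in>UNIV. Q x \<longrightarrow> (W x *v (f x - c)) $ i = 0"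
    by (rule AE_finite_allI) (auto intro: assms)
  then show ?thesis using Wpd
  proof eventually_elim
    fix x assume h: "\<forall>i\<in>UNIV. Q x \<longrightarrow> (W x *v (f x - c)) $ i = 0" and pd: "pos_def_mat (W x)"
    show "Q x \<longrightarrow> f x = c"
    proof
      assume "Q x"
      then have "W x *v (f x - c) = 0" using h by (simp add: vec_eq_iff)
      then have "f x - c = 0" by (rule pd_inj[OF pd])
      then show "f x = c" by simp
    qed
  qed
qed

end

context mwfo begin

lemma f_const_pos: "\<exists>c. AE x in lborel. 0 \<le> x \<longrightarrow> f x = c"
proof -
  obtain c where c: "\<And>m k. 0 \<le> k \<Longrightarrow> P TYPE('n) c (int m, k)" using pos_all by blast
  have Z: "\<And>n k i. 0 \<le> k \<Longrightarrow> set_lebesgue_integral lborel {real_of_int k / 2^n ..< real_of_int (k+1) / 2^n}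
            (\<lambda>x. (W x *v (f x - c)) $ i) = 0"
    by (rule const_from_P[where R="\<lambda>k. 0 \<le> k"]) (use c in \<open>auto simp: P_def\<close>)
  have "AE x in lborel. 0 \<le> x \<longrightarrow> f x = c"
    by (rule vec_zero_from_AE, rule D_pos_c[OF g_loc]) (rule Z)
  then show ?thesis by blast
qed

lemma f_const_neg: "\<exists>c. AE x in lborel. x < 0 \<longrightarrow> f x = c"
proof -
  obtain c where c: "\<And>m k. k < 0 \<Longrightarrow> P TYPE('n) c (int m, k)" using neg_all by blast
  have Z: "\<And>n k i. k < 0 \<Longrightarrow> set_lebesgue_integral lborel {real_of_int k / 2^n ..< real_of_int (k+1) / 2^n}
            (\<lambda>x. (W x *v (f x - c)) $ i) = 0"
    by (rule const_from_P[where R="\<lambda>k. k < 0"]) (use c in \<open>auto simp: P_def\<close>)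
  have "AE x in lborel. x < 0 \<longrightarrow> f x = c"
    by (rule vec_zero_from_AE, rule D_neg_c[OF g_loc]) (rule Z)
  then show ?thesis by blast
qed

end

context mwf begin

lemma ind_vec_eq: "ind_vec S e = (\<lambda>x. indicator S x *\<^sub>R e)"
  by (auto simp: ind_vec_def indicator_def fun_eq_iff)

lemma ind_meas: "S \<in> sets lborel \<Longrightarrow> ind_vec S (e::complex^'n) \<in> borel_measurable lborel"
  unfolding ind_vec_eq
  by (rule borel_measurable_scaleR[OF borel_measurable_indicator borel_measurable_const]) simp

lemma quad_ind: "cinner (W x *v ind_vec S e x) (ind_vec S e x) = indicator S x *\<^sub>R cinner (W x *v e) e"
  by (simp add: ind_vec_def indicator_def)

lemma adm_int:
  assumes "e \<in> admissible_vecs W S"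
  shows "integrable lborel (\<lambda>x. indicator S x *\<^sub>R cinner (W x *v e) e)"
proof -
  have "integrable lborel (\<lambda>x. cinner (W x *v ind_vec S e x) (ind_vec S e x))"
    using assms unfolding admissible_vecs_def L2W_def by simp
  then show ?thesis by (simp only: quad_ind)
qed

lemma pair_int:
  assumes S: "S \<in> sets lborel" and u: "u \<in> admissible_vecs W S" and w: "w \<in> admissible_vecs W S"
  shows "integrable lborel (\<lambda>x. indicator S x *\<^sub>R cinner (W x *v u) w)"
proof -
  define B where "B = (\<lambda>x. indicator S x *\<^sub>R ((Re (cinner (W x *v u) u) + Re (cinner (W x *v w) w)) / 2))"
  have i1: "integrable lborel (\<lambda>x. Re (indicator S x *\<^sub>R cinner (W x *v u) u))"
    using adm_int[OF u] by (rule integrable_Re)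
  have i2: "integrable lborel (\<lambda>x. Re (indicator S x *\<^sub>R cinner (W x *v w) w))"
    using adm_int[OF w] by (rule integrable_Re)
  have iB: "integrable lborel B"
  proof -
    have "integrable lborel (\<lambda>x. (Re (indicator S x *\<^sub>R cinner (W x *v u) u) + Re (indicator S x *\<^sub>R cinner (W x *v w) w)) / 2)"
      using i1 i2 by (intro integrable_divide Bochner_Integration.integrable_add)
    moreover have "\<And>x. (Re (indicator S x *\<^sub>R cinner (W x *v u) u) + Re (indicator S x *\<^sub>R cinner (W x *v w) w)) / 2 = B x"
      unfolding B_def by (simp add: algebra_simps add_divide_distrib)
    ultimately show ?thesis by simp
  qed
  have mf: "(\<lambda>x. cinner (W x *v u) w) \<in> borel_measurable lborel"
    by (rule meas_cinner[OF Wv_meas[OF borel_measurable_const] borel_measurable_const])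
  have mg: "(\<lambda>x. indicator S x *\<^sub>R cinner (W x *v u) w) \<in> borel_measurable lborel"
    using mf S by measurable
  have "AE x in lborel. norm (indicator S x *\<^sub>R cinner (W x *v u) w) \<le> norm (B x)"
    using Wpsd
  proof eventually_elim
    fix x assume psd: "pos_semidef_mat (W x)"
    have b: "cmod (cinner (W x *v u) w) \<le> (Re (cinner (W x *v u) u) + Re (cinner (W x *v w) w)) / 2"
      by (rule amgm[OF psd])
    then have "0 \<le> (Re (cinner (W x *v u) u) + Re (cinner (W x *v w) w)) / 2"
      by (meson norm_ge_zero order_trans)
    then show "norm (indicator S x *\<^sub>R cinner (W x *v u) w) \<le> norm (B x)"
      unfolding B_def using b by (auto simp: indicator_def)
  qed
  then show ?thesis by (rule Bochner_Integration.integrable_bound[OF iB mg])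
qed

lemma end_zero:
  assumes S: "S \<in> sets lborel" "emeasure lborel S > 0"
    and fc: "AE x in lborel. x \<in> S \<longrightarrow> f x = c"
    and onb: "is_cONB E (admissible_vecs W S)"
    and orthE: "\<And>e. e \<in> E \<Longrightarrow> l2w_inner W f (normalized_ind W S e) = 0"
  shows "c = 0"
proof (rule ccontr)
  assume cnz: "c \<noteq> 0"
  have finE: "finite E" and EV: "E \<subseteq> admissible_vecs W S"
    and ee: "\<And>e. e \<in> E \<Longrightarrow> cinner e e = 1"
    and V: "admissible_vecs W S = {\<Sum>e\<in>E. a e *s e | a. True}"
    using onb unfolding is_cONB_def by auto
  have fcS: "AE x in lborel. indicator S x *\<^sub>R cinner (W x *v f x) w = indicator S x *\<^sub>R cinner (W x *v c) w" for w
    using fc by eventually_elim (auto simp: indicator_def)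
  have mfw: "(\<lambda>x. indicator S x *\<^sub>R cinner (W x *v f x) w) \<in> borel_measurable lborel" for w
  proof -
    have "(\<lambda>x. cinner (W x *v f x) w) \<in> borel_measurable lborel"
      by (rule meas_cinner[OF Wv_meas[OF fmeas] borel_measurable_const])
    then show ?thesis using S(1) by measurable
  qed
  have mcw: "(\<lambda>x. indicator S x *\<^sub>R cinner (W x *v c) w) \<in> borel_measurable lborel" for w
  proof -
    have "(\<lambda>x. cinner (W x *v c) w) \<in> borel_measurable lborel"
      by (rule meas_cinner[OF Wv_meas[OF borel_measurable_const] borel_measurable_const])
    then show ?thesis using S(1) by measurable
  qed
  have cadm: "c \<in> admissible_vecs W S"
    unfolding admissible_vecs_def L2W_def
  proof (intro CollectI conjI)
    show "ind_vec S c \<in> borel_measurable lborel" by (rule ind_meas[OF S(1)])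
    have i: "integrable lborel (\<lambda>x. indicator S x *\<^sub>R cinner (W x *v f x) (f x))"
      using energy_int S(1) by (intro integrable_mult_indicator) auto
    have ae: "AE x in lborel. indicator S x *\<^sub>R cinner (W x *v f x) (f x) = cinner (W x *v ind_vec S c x) (ind_vec S c x)"
      using fc by eventually_elim (auto simp: quad_ind indicator_def)
    have m: "(\<lambda>x. cinner (W x *v ind_vec S c x) (ind_vec S c x)) \<in> borel_measurable lborel"
      by (rule meas_cinner[OF Wv_meas[OF ind_meas[OF S(1)]] ind_meas[OF S(1)]])
    show "integrable lborel (\<lambda>x. cinner (W x *v ind_vec S c x) (ind_vec S c x))"
      by (rule integrable_cong_AE_imp[OF i m ae])
  qed
  have zero_e: "integral\<^sup>L lborel (\<lambda>x. indicator S x *\<^sub>R cinner (W x *v c) e) = 0" if e: "e \<in> E" for e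
  proof -
    have eadm: "e \<in> admissible_vecs W S" using e EV by blast
    have enz: "e \<noteq> 0" using ee[OF e] by auto
    have si: "set_integrable lborel S (\<lambda>x. cinner (W x *v e) e)"
      using adm_int[OF eadm] unfolding set_integrable_def .
    have pos: "Re (set_lebesgue_integral lborel S (\<lambda>x. cinner (W x *v e) e)) > 0"
      by (rule W_pos_int[OF S si enz])
    have "l2w_inner W (ind_vec S e) (ind_vec S e) = set_lebesgue_integral lborel S (\<lambda>x. cinner (W x *v e) e)"
      unfolding l2w_inner_def set_lebesgue_integral_def quad_ind ..
    then have nrm: "l2w_norm W (ind_vec S e) > 0" unfolding l2w_norm_def using pos by simp
    let ?s = "complex_of_real (1 / l2w_norm W (ind_vec S e))"
    have snz: "cnj ?s \<noteq> 0" using nrm by simp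
    have "l2w_inner W f (normalized_ind W S e) = integral\<^sup>L lborel (\<lambda>x. cnj ?s * (indicator S x *\<^sub>R cinner (W x *v f x) e))"
      unfolding l2w_inner_def normalized_ind_def
      by (rule Bochner_Integration.integral_cong) (auto simp: cinner_scale_right ind_vec_def indicator_def)
    also have "\<dots> = cnj ?s * integral\<^sup>L lborel (\<lambda>x. indicator S x *\<^sub>R cinner (W x *v f x) e)"
      by (rule integral_mult_right_zero)
    finally have "cnj ?s * integral\<^sup>L lborel (\<lambda>x. indicator S x *\<^sub>R cinner (W x *v f x) e) = 0"
      using orthE[OF e] by simp
    then have "integral\<^sup>L lborel (\<lambda>x. indicator S x *\<^sub>R cinner (W x *v f x) e) = 0" using snz by simp
    moreover have "integral\<^sup>L lborel (\<lambda>x. indicator S x *\<^sub>R cinner (W x *v f x) e) =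
        integral\<^sup>L lborel (\<lambda>x. indicator S x *\<^sub>R cinner (W x *v c) e)"
      by (rule integral_cong_AE[OF mfw mcw fcS])
    ultimately show ?thesis by simp
  qed
  obtain a where ca: "c = (\<Sum>e\<in>E. a e *s e)" using cadm unfolding V by blast
  have "integral\<^sup>L lborel (\<lambda>x. indicator S x *\<^sub>R cinner (W x *v c) c)
      = integral\<^sup>L lborel (\<lambda>x. \<Sum>e\<in>E. cnj (a e) * (indicator S x *\<^sub>R cinner (W x *v c) e))"
  proof (rule Bochner_Integration.integral_cong[OF refl])
    fix x
    have "cinner (W x *v c) c = (\<Sum>e\<in>E. cnj (a e) * cinner (W x *v c) e)"
      by (subst (2) ca) (simp add: cinner_sum_right cinner_scale_right)
    then show "indicator S x *\<^sub>R cinner (W x *v c) c = (\<Sum>e\<in>E. cnj (a e) * (indicator S x *\<^sub>R cinner (W x *v c) e))"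
      by (simp add: scaleR_sum_right)
  qed
  also have "\<dots> = (\<Sum>e\<in>E. integral\<^sup>L lborel (\<lambda>x. cnj (a e) * (indicator S x *\<^sub>R cinner (W x *v c) e)))"
  proof (rule Bochner_Integration.integral_sum)
    fix e assume "e \<in> E"
    then have "e \<in> admissible_vecs W S" using EV by blast
    then show "integrable lborel (\<lambda>x. cnj (a e) * (indicator S x *\<^sub>R cinner (W x *v c) e))"
      by (intro integrable_mult_right pair_int[OF S(1) cadm])
  qed
  also have "\<dots> = (\<Sum>e\<in>E. cnj (a e) * integral\<^sup>L lborel (\<lambda>x. indicator S x *\<^sub>R cinner (W x *v c) e))"
    by (simp only: integral_mult_right_zero)
  also have "\<dots> = 0" using zero_e by simp
  finally have z: "set_lebesgue_integral lborel S (\<lambda>x. cinner (W x *v c) c) = 0"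
    unfolding set_lebesgue_integral_def .
  have si: "set_integrable lborel S (\<lambda>x. cinner (W x *v c) c)"
    using adm_int[OF cadm] unfolding set_integrable_def .
  have "Re (set_lebesgue_integral lborel S (\<lambda>x. cinner (W x *v c) c)) > 0"
    by (rule W_pos_int[OF S si cnz])
  then show False using z by simp
qed

end

lemma pos_Ici: "emeasure lborel {0::real..} > 0"
proof -
  have "emeasure lborel {0::real..1} \<le> emeasure lborel {0::real..}" by (rule emeasure_mono) auto
  then show ?thesis using order_less_le_trans[OF zero_less_one] by simp
qed

lemma pos_Iic: "emeasure lborel {..0::real} > 0"
proof -
  have "emeasure lborel {-1::real..0} \<le> emeasure lborel {..0::real}" by (rule emeasure_mono) auto
  then show ?thesis using order_less_le_trans[OF zero_less_one] by simp
qed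

theorem mainTheorem4:
  fixes W :: "real \<Rightarrow> complex^'n^'n"
    and v :: "int \<times> int \<Rightarrow> 'n \<Rightarrow> complex^'n"
    and E1 E2 :: "(complex^'n) set"
    and f :: "real \<Rightarrow> complex^'n"
  assumes "matrix_weight W"
    and "\<And>J. orthonormal_eigenbasis (haar_matrix W J) (v J)"
    and "is_cONB E1 (admissible_vecs W {0..})"
    and "is_cONB E2 (admissible_vecs W {..0})"
    and "f \<in> L2W W"
    and "\<And>h. h \<in> haar_system W v E1 E2 \<Longrightarrow> l2w_inner W f h = 0"
  shows "AE x in lborel. f x = 0"
proof -
  interpret mwfo W f v E1 E2
    by unfold_locales (use assms in auto)
  obtain cp where cp: "AE x in lborel. 0 \<le> x \<longrightarrow> f x = cp" using f_const_pos by blast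
  obtain cn where cn: "AE x in lborel. x < 0 \<longrightarrow> f x = cn" using f_const_neg by blast
  have cp0: "cp = 0"
  proof (rule end_zero[OF _ pos_Ici _ assms(3)])
    show "{0::real..} \<in> sets lborel" by simp
    show "AE x in lborel. x \<in> {0..} \<longrightarrow> f x = cp" using cp by simp
    fix e assume "e \<in> E1"
    then have "normalized_ind W {0..} e \<in> haar_system W v E1 E2"
      unfolding haar_system_def by blast
    then show "l2w_inner W f (normalized_ind W {0..} e) = 0" by (rule assms(6))
  qed
  have cn0: "cn = 0"
  proof (rule end_zero[OF _ pos_Iic _ assms(4)])
    show "{..0::real} \<in> sets lborel" by simp
    show "AE x in lborel. x \<in> {..0} \<longrightarrow> f x = cn"
      using cn AE_lborel_singleton[of 0] by eventually_elim (auto simp: le_less)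
    fix e assume "e \<in> E2"
    then have "normalized_ind W {..0} e \<in> haar_system W v E1 E2"
      unfolding haar_system_def by blast
    then show "l2w_inner W f (normalized_ind W {..0} e) = 0" by (rule assms(6))
  qed
  show ?thesis using cp cn by eventually_elim (use cp0 cn0 in \<open>auto simp: not_le\<close>)
qed

end
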